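(* Let $Y$ be a totally ordered set. The Lyndon monomials $P_w$, for $w$ ranging over Lyndon words in $Y$ without repetition (no letter occurring twice), form a $\mathbb Z$-basis of $R\mathfrak L[Y]$. Consequently, for $|Y|=n$, the degree-$k$ part $R\mathfrak L[n]_k$ is free abelian of rank $(k-1)!\binom{n}{k}$.
   Context: $R\mathfrak L[Y]$ is the Lie ring generated by $Y$ subject to $[y_1,[y_2,[\cdots[y_{s-1},y_s]\cdots]]]=0$ for every $s\geq2$ and every $(y_1,\dots,y_s)\in Y^s$ with $y_i=y_j$ for some $i\neq j$; it is graded by bracket length. Words in $Y$ are ordered lexicographically (dictionary order). A Lyndon word is a nonempty word strictly smaller than each of its proper nonempty suffixes. The standard factorization of a word $w$ of length $\geq2$ is $w=uv$ where $v$ is its smallest proper suffix. Lyndon monomials are defined inductively: $P_y=y$ for a letter $y$, and $P_w=[P_u,P_v]$ if $w=uv$ is the standard factorization of the Lyndon word $w$ (here $P_w$ is viewed in $R\mathfrak L[Y]$). *)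

theory Defs
  imports Main
begin

text \<open>Binary bracket trees over the alphabet: the free magma M(Y).\<close>
datatype 'a btree = Leaf 'a | Br "'a btree" "'a btree"

fun nleaves :: "'a btree \<Rightarrow> nat" where
  "nleaves (Leaf _) = 1"
| "nleaves (Br s t) = nleaves s + nleaves t"

text \<open>Elements of the free nonassociative ring: finitely supported integer
  valued functions on trees (formal Z-linear combinations of trees).\<close>
definition fin_supp :: "('a btree \<Rightarrow> int) \<Rightarrow> bool" where
  "fin_supp p \<longleftrightarrow> finite {t. p t \<noteq> 0}"

definition mmul :: "('a btree \<Rightarrow> int) \<Rightarrow> ('a btree \<Rightarrow> int) \<Rightarrow> ('a btree \<Rightarrow> int)" where
  "mmul p q t = (case t of Leaf _ \<Rightarrow> 0 | Br u v \<Rightarrow> p u * q v)"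

definition gen :: "'a \<Rightarrow> ('a btree \<Rightarrow> int)" where
  "gen y = (\<lambda>t. if t = Leaf y then 1 else 0)"

fun rnorm :: "'a list \<Rightarrow> ('a btree \<Rightarrow> int)" where
  "rnorm [] = (\<lambda>_. 0)"
| "rnorm [y] = gen y"
| "rnorm (y # ys) = mmul (gen y) (rnorm ys)"

text \<open>The two-sided ideal I of the free nonassociative ring generated by the Lie ring
  relations ([a,a] and Jacobi) together with the defining relations of RL[Y]
  (right-normed brackets of length s >= 2 with a repeated letter).\<close>
inductive_set rl_ideal :: "('a btree \<Rightarrow> int) set" where
  alt: "fin_supp a \<Longrightarrow> mmul a a \<in> rl_ideal"
| jacobi: "fin_supp a \<Longrightarrow> fin_supp b \<Longrightarrow> fin_supp c \<Longrightarrow>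
     (\<lambda>t. mmul a (mmul b c) t + mmul b (mmul c a) t + mmul c (mmul a b) t) \<in> rl_ideal"
| rep: "2 \<le> length ys \<Longrightarrow> \<not> distinct ys \<Longrightarrow> rnorm ys \<in> rl_ideal"
| zero: "(\<lambda>_. 0) \<in> rl_ideal"
| add: "p \<in> rl_ideal \<Longrightarrow> q \<in> rl_ideal \<Longrightarrow> (\<lambda>t. p t + q t) \<in> rl_ideal"
| neg: "p \<in> rl_ideal \<Longrightarrow> (\<lambda>t. - p t) \<in> rl_ideal"
| mult_left: "fin_supp a \<Longrightarrow> p \<in> rl_ideal \<Longrightarrow> mmul a p \<in> rl_ideal"
| mult_right: "fin_supp a \<Longrightarrow> p \<in> rl_ideal \<Longrightarrow> mmul p a \<in> rl_ideal"

text \<open>Congruence modulo I, i.e. equality in RL[Y].\<close>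
definition rl_eq :: "('a btree \<Rightarrow> int) \<Rightarrow> ('a btree \<Rightarrow> int) \<Rightarrow> bool" where
  "rl_eq p q \<longleftrightarrow> (\<lambda>t. p t - q t) \<in> rl_ideal"

definition homog :: "nat \<Rightarrow> ('a btree \<Rightarrow> int) \<Rightarrow> bool" where
  "homog k p \<longleftrightarrow> fin_supp p \<and> (\<forall>t. p t \<noteq> 0 \<longrightarrow> nleaves t = k)"

text \<open>Lexicographic (dictionary) order on words: a proper prefix is smaller.\<close>
definition word_less :: "'a::linorder list \<Rightarrow> 'a list \<Rightarrow> bool" where
  "word_less u v \<longleftrightarrow> (u, v) \<in> lexord {(a, b). a < b}"

definition lyndon :: "'a::linorder list \<Rightarrow> bool" where
  "lyndon w \<longleftrightarrow> w \<noteq> [] \<and> (\<forall>i. 0 < i \<and> i < length w \<longrightarrow> word_less w (drop i w))"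

text \<open>Position of the standard factorization w = uv: v = drop i w is the smallest
  proper nonempty suffix.\<close>
definition std_idx :: "'a::linorder list \<Rightarrow> nat" where
  "std_idx w = (THE i. 0 < i \<and> i < length w \<and>
      (\<forall>j. 0 < j \<and> j < length w \<and> j \<noteq> i \<longrightarrow> word_less (drop i w) (drop j w)))"

function lyn_mon :: "'a::linorder list \<Rightarrow> ('a btree \<Rightarrow> int)" where
  "lyn_mon w =
    (if length w \<le> 1 then gen (hd w)
     else if 0 < std_idx w \<and> std_idx w < length w
       then mmul (lyn_mon (take (std_idx w) w)) (lyn_mon (drop (std_idx w) w))
       else (\<lambda>_. 0))"
  by pat_completeness auto
termination
  by (relation "measure length") auto

definition lyn_comb :: "('a::linorder list \<Rightarrow> int) \<Rightarrow> ('a btree \<Rightarrow> int)" where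
  "lyn_comb c = (\<lambda>t. \<Sum>w\<in>{w. c w \<noteq> 0}. c w * lyn_mon w t)"

end

theory Submission
  imports Defs "HOL-Library.Multiset"
begin

lemma word_less_lexordp: "word_less u v \<longleftrightarrow> ord_class.lexordp (u::'a::linorder list) v"
  by (simp add: word_less_def lexordp_conv_lexord)

lemma word_less_irrefl: "\<not> word_less (u::'a::linorder list) u"
  by (simp add: word_less_lexordp lexordp_irreflexive')

lemma word_less_trans: "word_less (u::'a::linorder list) v \<Longrightarrow> word_less v w \<Longrightarrow> word_less u w"
  unfolding word_less_lexordp by (rule lexordp_trans)

lemma word_less_linear: "word_less (u::'a::linorder list) v \<or> u = v \<or> word_less v u"
  unfolding word_less_lexordp by (rule lexordp_linear)

lemma word_less_asym: "word_less (u::'a::linorder list) v \<Longrightarrow> \<not> word_less v u"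
  using word_less_trans word_less_irrefl by blast

lemma word_less_Cons: "word_less ((x::'a::linorder)#xs) (y#ys) \<longleftrightarrow> x < y \<or> (x = y \<and> word_less xs ys)"
  unfolding word_less_lexordp by auto

lemma word_less_Nil[simp]: "word_less [] ys \<longleftrightarrow> ys \<noteq> []" "\<not> word_less xs []"
  unfolding word_less_lexordp by auto

lemma word_less_append_left: "word_less (xs @ us) (xs @ vs) \<longleftrightarrow> word_less (us::'a::linorder list) vs"
  by (induct xs) (auto simp: word_less_Cons)

lemma word_less_prefix: "ys \<noteq> [] \<Longrightarrow> word_less (xs::'a::linorder list) (xs @ ys)"
  unfolding word_less_lexordp by (rule lexordp_append_rightI)

lemma word_less_not_prefix_append:
  "word_less (a::'a::linorder list) b \<Longrightarrow> \<not> (\<exists>z. b = a @ z) \<Longrightarrow> word_less (a @ c) (b @ d)"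
proof (induct a arbitrary: b)
  case Nil then show ?case by auto
next
  case (Cons x xs)
  then obtain y ys where b: "b = y # ys" by (cases b) auto
  show ?case using Cons b by (auto simp: word_less_Cons)
qed

lemma word_less_same_len_append:
  "word_less (a::'a::linorder list) b \<Longrightarrow> length a = length b \<Longrightarrow> word_less (a @ c) (b @ d)"
  by (rule word_less_not_prefix_append) (auto simp: word_less_irrefl)

lemma word_min_exists:
  assumes "finite S" "S \<noteq> {}"
  shows "\<exists>m\<in>S. \<forall>x\<in>S. \<not> word_less x (m::'a::linorder list)"
  using assms
proof (induct rule: finite_ne_induct)
  case (singleton x) then show ?case by (auto simp: word_less_irrefl)
next
  case (insert x F)
  then obtain m where m: "m \<in> F" "\<forall>y\<in>F. \<not> word_less y m" by blast
  show ?case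
  proof (cases "word_less x m")
    case True
    then show ?thesis using m word_less_trans word_less_irrefl by (metis insert_iff)
  next
    case False then show ?thesis using m by auto
  qed
qed

lemma std_idx_props:
  fixes w :: "'a::linorder list"
  assumes "2 \<le> length w"
  shows "0 < std_idx w \<and> std_idx w < length w \<and>
    (\<forall>j. 0 < j \<and> j < length w \<and> j \<noteq> std_idx w \<longrightarrow> word_less (drop (std_idx w) w) (drop j w))"
proof -
  let ?P = "\<lambda>i. 0 < i \<and> i < length w \<and>
      (\<forall>j. 0 < j \<and> j < length w \<and> j \<noteq> i \<longrightarrow> word_less (drop i w) (drop j w))"
  let ?S = "(\<lambda>j. drop j w) ` {0<..<length w}"
  have "1 \<in> {0<..<length w}" using assms by simp
  then have "finite ?S" "?S \<noteq> {}" by auto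
  from word_min_exists[OF this] obtain i where i: "0 < i" "i < length w"
    "\<forall>j\<in>{0<..<length w}. \<not> word_less (drop j w) (drop i w)" by auto
  have Pi: "?P i"
  proof -
    have "word_less (drop i w) (drop j w)" if "0 < j" "j < length w" "j \<noteq> i" for j
    proof -
      have "drop i w \<noteq> drop j w"
      proof
        assume "drop i w = drop j w" then have "length (drop i w) = length (drop j w)" by simp
        then show False using that i by simp
      qed
      then show ?thesis using word_less_linear[of "drop i w" "drop j w"] i(3) that by auto
    qed
    then show ?thesis using i by auto
  qed
  have "?P k \<Longrightarrow> k = i" for k
    using Pi word_less_asym by blast
  then have "std_idx w = i" unfolding std_idx_def using Pi by (rule the_equality[rotated])
  then show ?thesis using Pi by simp
qed

definition lyn_u :: "'a::linorder list \<Rightarrow> 'a list" where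
  "lyn_u w = take (std_idx w) w"
definition lyn_v :: "'a::linorder list \<Rightarrow> 'a list" where
  "lyn_v w = drop (std_idx w) w"

lemma lyn_mon_long:
  fixes w :: "'a::linorder list"
  assumes "2 \<le> length w"
  shows "lyn_mon w = mmul (lyn_mon (lyn_u w)) (lyn_mon (lyn_v w))"
  using std_idx_props[OF assms] assms by (simp add: lyn_u_def lyn_v_def)

lemma lyn_mon_short:
  "length w \<le> 1 \<Longrightarrow> lyn_mon w = gen (hd w)"
  by simp

lemma lyn_uv:
  fixes w :: "'a::linorder list"
  assumes "2 \<le> length w"
  shows "w = lyn_u w @ lyn_v w" "lyn_u w \<noteq> []" "lyn_v w \<noteq> []"
    "length (lyn_u w) < length w" "length (lyn_v w) < length w"
  using std_idx_props[OF assms] by (auto simp: lyn_u_def lyn_v_def)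

lemma lyndon_v:
  fixes w :: "'a::linorder list"
  assumes "lyndon w" "2 \<le> length w"
  shows "lyndon (lyn_v w)" "word_less w (lyn_v w)"
proof -
  note P = std_idx_props[OF assms(2)]
  show "word_less w (lyn_v w)" using assms P by (auto simp: lyndon_def lyn_v_def)
  show "lyndon (lyn_v w)" unfolding lyndon_def
  proof (intro conjI allI impI)
    show "lyn_v w \<noteq> []" using lyn_uv[OF assms(2)] by simp
    fix k assume k: "0 < k \<and> k < length (lyn_v w)"
    have "drop k (lyn_v w) = drop (std_idx w + k) w" by (simp add: lyn_v_def add.commute)
    then show "word_less (lyn_v w) (drop k (lyn_v w))"
      using P k by (auto simp: lyn_v_def)
  qed
qed

lemma lyndon_u:
  fixes w :: "'a::linorder list"
  assumes "lyndon w" "2 \<le> length w"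
  shows "lyndon (lyn_u w)"
  unfolding lyndon_def
proof (intro conjI allI impI)
  note P = std_idx_props[OF assms(2)]
  note uv = lyn_uv[OF assms(2)]
  let ?u = "lyn_u w" and ?v = "lyn_v w"
  show "?u \<noteq> []" using uv by simp
  fix k assume k: "0 < k \<and> k < length ?u"
  let ?s = "drop k ?u"
  have "drop k w = drop k (?u @ ?v)" using uv(1) by simp
  also have "\<dots> = ?s @ ?v" using k by simp
  finally have dk: "drop k w = ?s @ ?v" .
  have "word_less w (drop k w)" using assms k uv by (auto simp: lyndon_def)
  then have wl: "word_less (?u @ ?v) (?s @ ?v)" using dk uv(1) by simp
  have lu: "length ?u = std_idx w" using P by (simp add: lyn_u_def)
  show "word_less ?u ?s"
  proof (cases "\<exists>z. ?u = ?s @ z")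
    case True
    then obtain z where z: "?u = ?s @ z" by blast
    have zne: "z \<noteq> []"
    proof
      assume "z = []" then have "length ?u = length ?s" using z by simp
      then show False using k by (simp only: length_drop) arith
    qed
    have "word_less (?s @ (z @ ?v)) (?s @ ?v)" using wl z by (metis append_assoc)
    then have c1: "word_less (z @ ?v) ?v" by (simp only: word_less_append_left)
    let ?j = "length ?s"
    have "drop ?j w = drop ?j (?u @ ?v)" using uv(1) by simp
    also have "\<dots> = drop ?j ?u @ ?v" by simp
    also have "drop ?j ?u = z" using z by (metis append_eq_conv_conj)
    finally have dj: "drop ?j w = z @ ?v" .
    have j: "0 < ?j" "?j < length w" "?j \<noteq> std_idx w" using k lu uv(4) by auto
    have "word_less ?v (drop ?j w)" using P j unfolding lyn_v_def by blast
    then show ?thesis using c1 dj word_less_asym by auto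
  next
    case False
    have "?u \<noteq> ?s" using False by (metis append_Nil2)
    moreover have "\<not> word_less ?s ?u"
    proof
      assume "word_less ?s ?u"
      then have "word_less (?s @ ?v) (?u @ ?v)" using False word_less_not_prefix_append by blast
      then show False using wl word_less_asym by blast
    qed
    ultimately show ?thesis using word_less_linear by blast
  qed
qed

lemma lyndon_hd_le:
  fixes w :: "'a::linorder list"
  assumes "lyndon w" "x \<in> set w"
  shows "hd w \<le> x"
proof -
  obtain i where i: "i < length w" "w ! i = x" using assms(2) by (metis in_set_conv_nth)
  show ?thesis
  proof (cases "i = 0")
    case True then show ?thesis using i assms(1) by (simp add: hd_conv_nth lyndon_def)
  next
    case False
    then have "word_less w (drop i w)" using assms(1) i by (auto simp: lyndon_def)
    moreover have "drop i w = x # drop (Suc i) w" using i by (metis Cons_nth_drop_Suc)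
    moreover obtain a as where "w = a # as" using assms(1) by (cases w) (auto simp: lyndon_def)
    ultimately show ?thesis by (auto simp: word_less_Cons)
  qed
qed

lemma distinct_lyndon_iff:
  fixes w :: "'a::linorder list"
  assumes "distinct w"
  shows "lyndon w \<longleftrightarrow> w \<noteq> [] \<and> (\<forall>x\<in>set w. hd w \<le> x)"
proof
  assume "lyndon w" then show "w \<noteq> [] \<and> (\<forall>x\<in>set w. hd w \<le> x)"
    using lyndon_hd_le by (auto simp: lyndon_def)
next
  assume h: "w \<noteq> [] \<and> (\<forall>x\<in>set w. hd w \<le> x)"
  show "lyndon w" unfolding lyndon_def
  proof (intro conjI allI impI)
    show "w \<noteq> []" using h by simp
    fix i assume i: "0 < i \<and> i < length w"
    obtain a as where w: "w = a # as" using h by (cases w) auto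
    have "drop i w = w ! i # drop (Suc i) w" using i by (metis Cons_nth_drop_Suc)
    moreover have "w ! i \<in> set w" using i by simp
    moreover have "w ! i \<noteq> a" using assms i w by (metis nth_Cons_0 nth_eq_iff_index_eq length_pos_if_in_set list.set_intros(1) neq0_conv)
    ultimately show "word_less w (drop i w)" using h w by (auto simp: word_less_Cons)
  qed
qed

section \<open>The embedding into the free associative ring\<close>

definition conv :: "('a list \<Rightarrow> int) \<Rightarrow> ('a list \<Rightarrow> int) \<Rightarrow> 'a list \<Rightarrow> int" where
  "conv f g w = (\<Sum>i\<le>length w. f (take i w) * g (drop i w))"

definition brk :: "('a list \<Rightarrow> int) \<Rightarrow> ('a list \<Rightarrow> int) \<Rightarrow> 'a list \<Rightarrow> int" where
  "brk f g w = conv f g w - conv g f w"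

lemma conv_diff_left: "conv (\<lambda>x. f x - g x) h = (\<lambda>w. conv f h w - conv g h w)"
  by (rule ext) (simp add: conv_def left_diff_distrib sum_subtractf)

lemma conv_diff_right: "conv h (\<lambda>x. f x - g x) = (\<lambda>w. conv h f w - conv h g w)"
  by (rule ext) (simp add: conv_def right_diff_distrib sum_subtractf)

lemma conv_assoc: "conv (conv f g) h = conv f (conv g h)"
proof (rule ext)
  fix w :: "'a list"
  let ?n = "length w"
  let ?G = "\<lambda>i j. f (take i w) * g (take j (drop i w)) * h (drop (i + j) w)"
  have "conv (conv f g) h w = (\<Sum>k\<le>?n. (\<Sum>i\<le>k. f (take i (take k w)) * g (drop i (take k w))) * h (drop k w))"
    unfolding conv_def
  proof (rule sum.cong[OF refl])
    fix k assume "k \<in> {..length w}"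
    then have "length (take k w) = k" by simp
    then show "(\<Sum>i\<le>length (take k w). f (take i (take k w)) * g (drop i (take k w))) * h (drop k w) =
      (\<Sum>i\<le>k. f (take i (take k w)) * g (drop i (take k w))) * h (drop k w)" by simp
  qed
  also have "\<dots> = (\<Sum>k\<le>?n. \<Sum>i\<le>k. ?G i (k - i))"
  proof (rule sum.cong[OF refl])
    fix k assume k: "k \<in> {..?n}"
    show "(\<Sum>i\<le>k. f (take i (take k w)) * g (drop i (take k w))) * h (drop k w) = (\<Sum>i\<le>k. ?G i (k - i))"
      unfolding sum_distrib_right
    proof (rule sum.cong[OF refl])
      fix i assume i: "i \<in> {..k}"
      then show "f (take i (take k w)) * g (drop i (take k w)) * h (drop k w) = ?G i (k - i)"
        by (simp add: min_def take_drop)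
    qed
  qed
  also have "\<dots> = (\<Sum>(i,j)\<in>{(i,j). i + j \<le> ?n}. ?G i j)"
    by (rule sum.triangle_reindex_eq[symmetric])
  also have "{(i,j). i + j \<le> ?n} = Sigma {..?n} (\<lambda>i. {..?n - i})" by auto
  also have "(\<Sum>(i,j)\<in>Sigma {..?n} (\<lambda>i. {..?n - i}). ?G i j) = (\<Sum>i\<le>?n. \<Sum>j\<le>?n - i. ?G i j)"
    by (rule sum.Sigma[symmetric]) auto
  also have "\<dots> = conv f (conv g h) w"
    unfolding conv_def sum_distrib_left
    by (rule sum.cong[OF refl], rule sum.cong) (auto simp: mult.assoc add.commute)
  finally show "conv (conv f g) h w = conv f (conv g h) w" .
qed

lemma brk_jacobi: "brk a (brk b c) w + brk b (brk c a) w + brk c (brk a b) w = 0"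
  unfolding brk_def[abs_def] conv_diff_left conv_diff_right conv_assoc by simp

lemma brk_self: "brk a a w = 0"
  by (simp add: brk_def)

lemma conv_vanish:
  assumes "\<forall>x. distinct x \<longrightarrow> P x = 0" "distinct w"
  shows "conv A P w = 0" "conv P A w = 0"
  using assms by (auto simp: conv_def intro!: sum.neutral dest: distinct_take distinct_drop)

lemma conv_nonzero: "conv f g w \<noteq> 0 \<Longrightarrow> \<exists>i\<le>length w. f (take i w) \<noteq> 0 \<and> g (drop i w) \<noteq> 0"
  unfolding conv_def by (metis (mono_tags, lifting) atMost_iff mult_eq_0_iff sum.neutral)

fun T :: "'a btree \<Rightarrow> 'a list \<Rightarrow> int" where
  "T (Leaf y) = (\<lambda>w. if w = [y] then 1 else 0)"
| "T (Br s t) = brk (T s) (T t)"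

definition supp :: "('a btree \<Rightarrow> int) \<Rightarrow> 'a btree set" where
  "supp p = {t. p t \<noteq> 0}"

definition Phi :: "('a btree \<Rightarrow> int) \<Rightarrow> 'a list \<Rightarrow> int" where
  "Phi p w = (\<Sum>t\<in>supp p. p t * T t w)"

lemma Phi_superset: "finite B \<Longrightarrow> supp p \<subseteq> B \<Longrightarrow> Phi p w = (\<Sum>t\<in>B. p t * T t w)"
  unfolding Phi_def by (rule sum.mono_neutral_left) (auto simp: supp_def)

lemma fin_supp_supp: "fin_supp p \<longleftrightarrow> finite (supp p)"
  by (simp add: fin_supp_def supp_def)

lemma fin_supp_add: "fin_supp p \<Longrightarrow> fin_supp q \<Longrightarrow> fin_supp (\<lambda>t. p t + q t)"
  unfolding fin_supp_def by (rule finite_subset[of _ "{t. p t \<noteq> 0} \<union> {t. q t \<noteq> 0}"]) auto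

lemma fin_supp_diff: "fin_supp p \<Longrightarrow> fin_supp q \<Longrightarrow> fin_supp (\<lambda>t. p t - q t)"
  unfolding fin_supp_def by (rule finite_subset[of _ "{t. p t \<noteq> 0} \<union> {t. q t \<noteq> 0}"]) auto

lemma fin_supp_neg: "fin_supp p \<Longrightarrow> fin_supp (\<lambda>t. - p t)"
  unfolding fin_supp_def by simp

lemma fin_supp_smult: "fin_supp p \<Longrightarrow> fin_supp (\<lambda>t. c * p t)"
  unfolding fin_supp_def by (rule finite_subset[of _ "{t. p t \<noteq> 0}"]) auto

lemma fin_supp_zero: "fin_supp (\<lambda>_. 0)"
  unfolding fin_supp_def by simp

lemma fin_supp_gen: "fin_supp (gen y)"
  unfolding fin_supp_def gen_def by simp

lemma supp_mmul: "supp (mmul a b) \<subseteq> (\<lambda>(u,v). Br u v) ` (supp a \<times> supp b)"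
proof
  fix t assume "t \<in> supp (mmul a b)"
  then show "t \<in> (\<lambda>(u,v). Br u v) ` (supp a \<times> supp b)"
    by (cases t) (force simp: supp_def mmul_def)+
qed

lemma fin_supp_mmul: "fin_supp a \<Longrightarrow> fin_supp b \<Longrightarrow> fin_supp (mmul a b)"
  unfolding fin_supp_supp by (rule finite_subset[OF supp_mmul]) auto

lemma fin_supp_sum: "finite I \<Longrightarrow> (\<And>i. i \<in> I \<Longrightarrow> fin_supp (f i)) \<Longrightarrow> fin_supp (\<lambda>t. \<Sum>i\<in>I. f i t)"
proof (induct rule: finite_induct)
  case empty then show ?case by (simp add: fin_supp_zero)
next
  case (insert x F) then show ?case by (simp add: fin_supp_add)
qed

lemma Phi_add: "fin_supp p \<Longrightarrow> fin_supp q \<Longrightarrow> Phi (\<lambda>t. p t + q t) w = Phi p w + Phi q w"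
proof -
  assume fp: "fin_supp p" and fq: "fin_supp q"
  let ?B = "supp p \<union> supp q"
  have fB: "finite ?B" using fp fq by (simp add: fin_supp_supp)
  have "Phi (\<lambda>t. p t + q t) w = (\<Sum>t\<in>?B. (p t + q t) * T t w)"
    by (rule Phi_superset[OF fB]) (auto simp: supp_def)
  also have "\<dots> = (\<Sum>t\<in>?B. p t * T t w) + (\<Sum>t\<in>?B. q t * T t w)"
    by (simp add: distrib_right sum.distrib)
  also have "\<dots> = Phi p w + Phi q w"
    using Phi_superset[OF fB, of p] Phi_superset[OF fB, of q] by simp
  finally show ?thesis .
qed

lemma Phi_smult: "Phi (\<lambda>t. c * p t) w = c * Phi p w"
proof (cases "c = 0")
  case True then show ?thesis by (simp add: Phi_def supp_def)
next
  case False
  then have "supp (\<lambda>t. c * p t) = supp p" by (auto simp: supp_def)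
  then show ?thesis by (simp add: Phi_def sum_distrib_left mult.assoc)
qed

lemma Phi_neg: "Phi (\<lambda>t. - p t) w = - Phi p w"
  using Phi_smult[of "-1" p w] by simp

lemma Phi_diff: "fin_supp p \<Longrightarrow> fin_supp q \<Longrightarrow> Phi (\<lambda>t. p t - q t) w = Phi p w - Phi q w"
  using Phi_add[of p "\<lambda>t. - q t" w] Phi_neg[of q w] fin_supp_neg[of q] by simp

lemma Phi_zero: "Phi (\<lambda>_. 0) w = 0"
  by (simp add: Phi_def supp_def)

lemma Phi_sum: "finite I \<Longrightarrow> (\<And>i. i \<in> I \<Longrightarrow> fin_supp (f i)) \<Longrightarrow>
   Phi (\<lambda>t. \<Sum>i\<in>I. f i t) w = (\<Sum>i\<in>I. Phi (f i) w)"
proof (induct rule: finite_induct)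
  case empty then show ?case by (simp add: Phi_zero)
next
  case (insert x F)
  then show ?case by (simp add: Phi_add fin_supp_sum)
qed

lemma Phi_gen: "Phi (gen y) = T (Leaf y)"
proof (rule ext)
  fix w
  have "supp (gen y) = {Leaf y}" by (auto simp: supp_def gen_def)
  then show "Phi (gen y) w = T (Leaf y) w" by (simp add: Phi_def gen_def)
qed

lemma conv_sums:
  assumes "finite A" "finite B"
  shows "conv (\<lambda>x. \<Sum>u\<in>A. a u * F u x) (\<lambda>x. \<Sum>v\<in>B. b v * G v x) w
       = (\<Sum>u\<in>A. \<Sum>v\<in>B. a u * b v * conv (F u) (G v) w)"
proof -
  have "conv (\<lambda>x. \<Sum>u\<in>A. a u * F u x) (\<lambda>x. \<Sum>v\<in>B. b v * G v x) w
     = (\<Sum>i\<le>length w. \<Sum>u\<in>A. \<Sum>v\<in>B. a u * b v * (F u (take i w) * G v (drop i w)))"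
    unfolding conv_def sum_product by (simp add: ac_simps)
  also have "\<dots> = (\<Sum>u\<in>A. \<Sum>i\<le>length w. \<Sum>v\<in>B. a u * b v * (F u (take i w) * G v (drop i w)))"
    by (rule sum.swap)
  also have "\<dots> = (\<Sum>u\<in>A. \<Sum>v\<in>B. \<Sum>i\<le>length w. a u * b v * (F u (take i w) * G v (drop i w)))"
    by (rule sum.cong[OF refl], rule sum.swap)
  also have "\<dots> = (\<Sum>u\<in>A. \<Sum>v\<in>B. a u * b v * conv (F u) (G v) w)"
    by (simp add: conv_def sum_distrib_left)
  finally show ?thesis .
qed

lemma Phi_mmul:
  assumes fa: "fin_supp a" and fb: "fin_supp b"
  shows "Phi (mmul a b) w = brk (Phi a) (Phi b) w"
proof -
  let ?A = "supp a" and ?B = "supp b"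
  have fA: "finite ?A" and fB: "finite ?B" using fa fb by (auto simp: fin_supp_supp)
  let ?I = "(\<lambda>(u,v). Br u v) ` (?A \<times> ?B)"
  have inj: "inj_on (\<lambda>(u,v). Br u v) (?A \<times> ?B)" by (auto simp: inj_on_def)
  have "Phi (mmul a b) w = (\<Sum>t\<in>?I. mmul a b t * T t w)"
    by (rule Phi_superset[OF _ supp_mmul]) (use fA fB in auto)
  also have "\<dots> = (\<Sum>(u,v)\<in>?A \<times> ?B. a u * b v * T (Br u v) w)"
    by (subst sum.reindex[OF inj]) (simp add: case_prod_beta mmul_def)
  also have "\<dots> = (\<Sum>u\<in>?A. \<Sum>v\<in>?B. a u * b v * conv (T u) (T v) w)
               - (\<Sum>u\<in>?A. \<Sum>v\<in>?B. a u * b v * conv (T v) (T u) w)"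
    by (simp add: sum.cartesian_product[symmetric] brk_def right_diff_distrib sum_subtractf)
  also have "(\<Sum>u\<in>?A. \<Sum>v\<in>?B. a u * b v * conv (T u) (T v) w) = conv (Phi a) (Phi b) w"
    unfolding Phi_def[abs_def] by (rule conv_sums[symmetric, OF fA fB])
  also have "(\<Sum>u\<in>?A. \<Sum>v\<in>?B. a u * b v * conv (T v) (T u) w) = conv (Phi b) (Phi a) w"
    unfolding Phi_def[abs_def] conv_sums[OF fB fA]
    by (subst sum.swap) (simp add: ac_simps)
  finally show ?thesis by (simp add: brk_def)
qed

declare lyn_mon.simps[simp del]

section \<open>Phi kills the ideal on repetition-free words\<close>

definition msupp :: "'a multiset \<Rightarrow> ('a list \<Rightarrow> int) \<Rightarrow> bool" where
  "msupp M F \<longleftrightarrow> (\<forall>w. F w \<noteq> 0 \<longrightarrow> mset w = M)"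

lemma msupp_conv: "msupp M1 F \<Longrightarrow> msupp M2 G \<Longrightarrow> msupp (M1 + M2) (conv F G)"
  unfolding msupp_def
proof (intro allI impI)
  fix w assume F: "\<forall>w. F w \<noteq> 0 \<longrightarrow> mset w = M1" and G: "\<forall>w. G w \<noteq> 0 \<longrightarrow> mset w = M2"
    and c: "conv F G w \<noteq> 0"
  from conv_nonzero[OF c] obtain i where "F (take i w) \<noteq> 0" "G (drop i w) \<noteq> 0" by blast
  then have "mset (take i w) = M1" "mset (drop i w) = M2" using F G by auto
  then show "mset w = M1 + M2" by (metis append_take_drop_id mset_append)
qed

lemma msupp_brk: "msupp M1 F \<Longrightarrow> msupp M2 G \<Longrightarrow> msupp (M1 + M2) (brk F G)"
proof -
  assume a: "msupp M1 F" "msupp M2 G"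
  have "msupp (M1 + M2) (conv F G)" "msupp (M2 + M1) (conv G F)"
    using msupp_conv a by blast+
  then show ?thesis unfolding msupp_def brk_def
  proof (intro allI impI)
    fix w assume h1: "\<forall>w. conv F G w \<noteq> 0 \<longrightarrow> mset w = M1 + M2"
      and h2: "\<forall>w. conv G F w \<noteq> 0 \<longrightarrow> mset w = M2 + M1"
      and h3: "conv F G w - conv G F w \<noteq> 0"
    then have "conv F G w \<noteq> 0 \<or> conv G F w \<noteq> 0" by auto
    then show "mset w = M1 + M2" using h1 h2 by (auto simp: add.commute)
  qed
qed

lemma fin_supp_rnorm: "fin_supp (rnorm ys)"
  by (induct ys rule: rnorm.induct) (auto simp: fin_supp_zero fin_supp_gen fin_supp_mmul)

lemma msupp_rnorm: "ys \<noteq> [] \<Longrightarrow> msupp (mset ys) (Phi (rnorm ys))"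
proof (induct ys rule: rnorm.induct)
  case 1 then show ?case by simp
next
  case (2 y) then show ?case by (simp add: Phi_gen msupp_def)
next
  case (3 y v va)
  have "msupp ({#y#} + mset (v # va)) (brk (Phi (gen y)) (Phi (rnorm (v # va))))"
    by (rule msupp_brk) (use 3 in \<open>auto simp: Phi_gen msupp_def\<close>)
  moreover have "Phi (rnorm (y # v # va)) = brk (Phi (gen y)) (Phi (rnorm (v # va)))"
    by (rule ext) (simp add: Phi_mmul fin_supp_gen fin_supp_rnorm)
  ultimately show ?case by (simp add: add_mset_commute)
qed

lemma ideal_props: "p \<in> rl_ideal \<Longrightarrow> fin_supp p \<and> (\<forall>w. distinct w \<longrightarrow> Phi p w = 0)"
proof (induct rule: rl_ideal.induct)
  case (alt a) then show ?case by (simp add: fin_supp_mmul Phi_mmul brk_self)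
next
  case (jacobi a b c)
  have f: "fin_supp (mmul a (mmul b c))" "fin_supp (mmul b (mmul c a))" "fin_supp (mmul c (mmul a b))"
    using jacobi by (auto intro: fin_supp_mmul)
  have e: "Phi (\<lambda>t. mmul a (mmul b c) t + mmul b (mmul c a) t + mmul c (mmul a b) t) w =
    brk (Phi a) (brk (Phi b) (Phi c)) w + brk (Phi b) (brk (Phi c) (Phi a)) w + brk (Phi c) (brk (Phi a) (Phi b)) w" for w
  proof -
    have "Phi (\<lambda>t. mmul a (mmul b c) t + mmul b (mmul c a) t + mmul c (mmul a b) t) w =
      Phi (mmul a (mmul b c)) w + Phi (mmul b (mmul c a)) w + Phi (mmul c (mmul a b)) w"
      using f by (simp add: Phi_add fin_supp_add)
    moreover have "Phi (mmul b c) = brk (Phi b) (Phi c)" "Phi (mmul c a) = brk (Phi c) (Phi a)"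
      "Phi (mmul a b) = brk (Phi a) (Phi b)"
      using jacobi by (auto intro!: ext simp: Phi_mmul)
    ultimately show ?thesis using jacobi by (simp add: Phi_mmul fin_supp_mmul)
  qed
  show ?case using f e by (simp add: fin_supp_add brk_jacobi)
next
  case (rep ys)
  have "Phi (rnorm ys) w = 0" if "distinct w" for w
  proof (rule ccontr)
    assume "Phi (rnorm ys) w \<noteq> 0"
    moreover have "ys \<noteq> []" using rep by auto
    ultimately have "mset w = mset ys" using msupp_rnorm[of ys] by (auto simp: msupp_def)
    then show False using that rep mset_eq_imp_distinct_iff by blast
  qed
  then show ?case by (simp add: fin_supp_rnorm)
next
  case zero then show ?case by (simp add: fin_supp_zero Phi_zero)
next
  case (add p q) then show ?case by (simp add: fin_supp_add Phi_add)
next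
  case (neg p) then show ?case by (simp add: fin_supp_neg Phi_neg)
next
  case (mult_left a p) then show ?case
    by (simp add: fin_supp_mmul Phi_mmul brk_def conv_vanish)
next
  case (mult_right a p) then show ?case
    by (simp add: fin_supp_mmul Phi_mmul brk_def conv_vanish)
qed

lemma rl_eq_Phi:
  assumes "rl_eq x y" "fin_supp x" "fin_supp y" "distinct w"
  shows "Phi x w = Phi y w"
  using ideal_props[of "\<lambda>t. x t - y t"] assms by (auto simp: rl_eq_def Phi_diff)

section \<open>Triangularity of Lyndon monomials\<close>

definition tri :: "'a::linorder list \<Rightarrow> ('a list \<Rightarrow> int) \<Rightarrow> bool" where
  "tri w F \<longleftrightarrow> F w = 1 \<and> (\<forall>x. F x \<noteq> 0 \<longrightarrow> x = w \<or> (word_less w x \<and> length x = length w))"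

lemma word_less_append_right: "word_less (x::'a::linorder list) b \<Longrightarrow> word_less x (b @ a)"
  unfolding word_less_lexordp
proof (induct x arbitrary: b)
  case Nil then show ?case by (cases b) auto
next
  case (Cons y ys) then show ?case by (cases b) auto
qed

lemma conv_at_split:
  assumes "\<And>x. F x \<noteq> 0 \<Longrightarrow> length x = length u"
  shows "conv F G (u @ v) = F u * G v"
proof -
  have "conv F G (u @ v) = (\<Sum>i\<in>{length u}. F (take i (u @ v)) * G (drop i (u @ v)))"
    unfolding conv_def
  proof (rule sum.mono_neutral_right)
    show "\<forall>i\<in>{..length (u @ v)} - {length u}. F (take i (u @ v)) * G (drop i (u @ v)) = 0"
    proof
      fix i assume i: "i \<in> {..length (u @ v)} - {length u}"
      then have "length (take i (u @ v)) \<noteq> length u" by auto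
      then have "F (take i (u @ v)) = 0" using assms by blast
      then show "F (take i (u @ v)) * G (drop i (u @ v)) = 0" by simp
    qed
  qed auto
  then show ?thesis by simp
qed

lemma tri_conv:
  fixes u v :: "'a::linorder list"
  assumes tu: "tri u F" and tv: "tri v G"
  shows "conv F G (u @ v) = 1"
    "conv F G x \<noteq> 0 \<Longrightarrow> x = u @ v \<or> (word_less (u @ v) x \<and> length x = length (u @ v))"
proof -
  have lF: "F x \<noteq> 0 \<Longrightarrow> length x = length u" for x using tu by (auto simp: tri_def)
  show "conv F G (u @ v) = 1" using conv_at_split[OF lF] tu tv by (simp add: tri_def)
  assume "conv F G x \<noteq> 0"
  from conv_nonzero[OF this] obtain i where i: "F (take i x) \<noteq> 0" "G (drop i x) \<noteq> 0" by blast
  let ?a = "take i x" and ?b = "drop i x"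
  have a: "?a = u \<or> (word_less u ?a \<and> length ?a = length u)" using tu i by (auto simp: tri_def)
  have b: "?b = v \<or> (word_less v ?b \<and> length ?b = length v)" using tv i by (auto simp: tri_def)
  have x: "x = ?a @ ?b" by simp
  have la: "length ?a = length u" using a by auto
  have lb: "length ?b = length v" using b by auto
  have "length x = length (?a @ ?b)" by simp
  then have len: "length x = length (u @ v)" using la lb by simp
  show "x = u @ v \<or> (word_less (u @ v) x \<and> length x = length (u @ v))"
  proof (cases "?a = u")
    case True
    show ?thesis
    proof (cases "?b = v")
      case True
      then show ?thesis using \<open>?a = u\<close> x by simp
    next
      case False
      then have "word_less v ?b" using b by simp
      then have "word_less (u @ v) (u @ ?b)" by (simp only: word_less_append_left)
      then show ?thesis using \<open>?a = u\<close> x len by simp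
    qed
  next
    case False
    then have "word_less u ?a" using a by simp
    then have "word_less (u @ v) (?a @ ?b)"
      by (rule word_less_same_len_append) (use la in simp)
    then show ?thesis using x len by simp
  qed
qed

lemma tri_conv2:
  fixes u v :: "'a::linorder list"
  assumes tu: "tri u F" and tv: "tri v G" and wl: "word_less (u @ v) v"
  shows "conv G F x \<noteq> 0 \<Longrightarrow> word_less (u @ v) x \<and> length x = length (u @ v)"
proof -
  assume "conv G F x \<noteq> 0"
  from conv_nonzero[OF this] obtain i where i: "G (take i x) \<noteq> 0" "F (drop i x) \<noteq> 0" by blast
  let ?b = "take i x" and ?a = "drop i x"
  have a: "?a = u \<or> (word_less u ?a \<and> length ?a = length u)" using tu i by (auto simp: tri_def)
  have b: "?b = v \<or> (word_less v ?b \<and> length ?b = length v)" using tv i by (auto simp: tri_def)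
  have x: "x = ?b @ ?a" by simp
  have la: "length ?a = length u" using a by auto
  have lb: "length ?b = length v" using b by auto
  have "length x = length (?b @ ?a)" by simp
  then have len: "length x = length (u @ v)" using la lb by simp
  have "word_less (u @ v) ?b" using b wl word_less_trans by auto
  then have "word_less (u @ v) (?b @ ?a)" by (rule word_less_append_right)
  then have "word_less (u @ v) x" using x by simp
  then show ?thesis using len by simp
qed

lemma fin_supp_lyn_mon: "fin_supp (lyn_mon w)"
proof (induct w rule: lyn_mon.induct)
  case (1 w)
  show ?case
  proof (cases "length w \<le> 1")
    case True then show ?thesis by (simp only: lyn_mon_short fin_supp_gen)
  next
    case False
    then have l2: "2 \<le> length w" by simp
    note P = std_idx_props[OF l2]
    have "fin_supp (lyn_mon (take (std_idx w) w))" "fin_supp (lyn_mon (drop (std_idx w) w))"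
      using 1 False P by auto
    then show ?thesis unfolding lyn_mon_long[OF l2] lyn_u_def lyn_v_def by (rule fin_supp_mmul)
  qed
qed

lemma tri_lyn_mon: "lyndon (w::'a::linorder list) \<Longrightarrow> tri w (Phi (lyn_mon w))"
proof (induct "length w" arbitrary: w rule: less_induct)
  case less
  show ?case
  proof (cases "length w \<le> 1")
    case True
    then obtain y where w: "w = [y]" using less.prems
      by (cases w) (auto simp: lyndon_def)
    then show ?thesis by (simp add: lyn_mon_short Phi_gen tri_def)
  next
    case False
    then have l2: "2 \<le> length w" by simp
    let ?u = "lyn_u w" and ?v = "lyn_v w"
    note uv = lyn_uv[OF l2]
    have wuv: "?u @ ?v = w" using uv(1) by metis
    have tu: "tri ?u (Phi (lyn_mon ?u))" using less uv lyndon_u[OF less.prems l2] by blast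
    have tv: "tri ?v (Phi (lyn_mon ?v))" using less uv lyndon_v[OF less.prems l2] by blast
    have wl: "word_less (?u @ ?v) ?v" using lyndon_v[OF less.prems l2] wuv by simp
    have P: "Phi (lyn_mon w) = brk (Phi (lyn_mon ?u)) (Phi (lyn_mon ?v))"
      by (rule ext) (simp add: lyn_mon_long[OF l2] Phi_mmul fin_supp_lyn_mon)
    have c2w: "conv (Phi (lyn_mon ?v)) (Phi (lyn_mon ?u)) (?u @ ?v) = 0"
      using tri_conv2[OF tu tv wl, of "?u @ ?v"] word_less_irrefl by blast
    show ?thesis unfolding tri_def
    proof (intro conjI allI impI)
      show "Phi (lyn_mon w) w = 1"
        using tri_conv(1)[OF tu tv] c2w wuv P by (simp add: brk_def)
      fix x assume "Phi (lyn_mon w) x \<noteq> 0"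
      then have "conv (Phi (lyn_mon ?u)) (Phi (lyn_mon ?v)) x \<noteq> 0 \<or>
                 conv (Phi (lyn_mon ?v)) (Phi (lyn_mon ?u)) x \<noteq> 0" using P by (auto simp: brk_def)
      then show "x = w \<or> (word_less w x \<and> length x = length w)"
      proof (elim disjE)
        assume "conv (Phi (lyn_mon ?u)) (Phi (lyn_mon ?v)) x \<noteq> 0"
        then have "x = ?u @ ?v \<or> (word_less (?u @ ?v) x \<and> length x = length (?u @ ?v))"
          by (rule tri_conv(2)[OF tu tv])
        then show ?thesis using wuv by simp
      next
        assume "conv (Phi (lyn_mon ?v)) (Phi (lyn_mon ?u)) x \<noteq> 0"
        then have "word_less (?u @ ?v) x \<and> length x = length (?u @ ?v)"
          by (rule tri_conv2[OF tu tv wl])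
        then show ?thesis using wuv by simp
      qed
    qed
  qed
qed

lemma ideal_fin: "p \<in> rl_ideal \<Longrightarrow> fin_supp p"
  using ideal_props by blast

lemma ideal_diff: "p \<in> rl_ideal \<Longrightarrow> q \<in> rl_ideal \<Longrightarrow> (\<lambda>t. p t - q t) \<in> rl_ideal"
  using rl_ideal.add[OF _ rl_ideal.neg[of q], of p] by simp

lemma ideal_ext: assumes "p \<in> rl_ideal" "\<And>t. p t = q t" shows "q \<in> rl_ideal"
proof -
  have "p = q" using assms(2) by (rule ext)
  with assms(1) show ?thesis by simp
qed

lemma ideal_smult_nat: "p \<in> rl_ideal \<Longrightarrow> (\<lambda>t. int n * p t) \<in> rl_ideal"
proof (induct n)
  case 0 then show ?case using rl_ideal.zero by simp
next
  case (Suc n)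
  have "(\<lambda>t. int n * p t + p t) \<in> rl_ideal" using Suc by (intro rl_ideal.add) auto
  then show ?case by (rule ideal_ext) (simp add: algebra_simps)
qed

lemma ideal_smult: "p \<in> rl_ideal \<Longrightarrow> (\<lambda>t. k * p t) \<in> rl_ideal"
proof (cases "k \<ge> 0")
  case True
  assume p: "p \<in> rl_ideal"
  show ?thesis using ideal_smult_nat[OF p, of "nat k"] True by simp
next
  case False
  assume p: "p \<in> rl_ideal"
  have "(\<lambda>t. - (int (nat (- k)) * p t)) \<in> rl_ideal" using ideal_smult_nat[OF p, of "nat (-k)"] rl_ideal.neg by blast
  then show ?thesis by (rule ideal_ext) (use False in simp)
qed

lemma rl_eq_refl: "rl_eq x x"
  unfolding rl_eq_def using rl_ideal.zero by simp

lemma rl_eq_sym: assumes "rl_eq x y" shows "rl_eq y x"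
proof -
  have "(\<lambda>t. - (x t - y t)) \<in> rl_ideal" using assms unfolding rl_eq_def by (rule rl_ideal.neg)
  then show ?thesis unfolding rl_eq_def by (rule ideal_ext) simp
qed

lemma rl_eq_trans: assumes "rl_eq x y" "rl_eq y z" shows "rl_eq x z"
proof -
  have "(\<lambda>t. (x t - y t) + (y t - z t)) \<in> rl_ideal" using assms unfolding rl_eq_def by (rule rl_ideal.add)
  then show ?thesis unfolding rl_eq_def by (rule ideal_ext) simp
qed

lemma rl_eq_add: assumes "rl_eq x x'" "rl_eq y y'" shows "rl_eq (\<lambda>t. x t + y t) (\<lambda>t. x' t + y' t)"
proof -
  have "(\<lambda>t. (x t - x' t) + (y t - y' t)) \<in> rl_ideal" using assms unfolding rl_eq_def by (rule rl_ideal.add)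
  then show ?thesis unfolding rl_eq_def by (rule ideal_ext) simp
qed

lemma rl_eq_diff: assumes "rl_eq x x'" "rl_eq y y'" shows "rl_eq (\<lambda>t. x t - y t) (\<lambda>t. x' t - y' t)"
proof -
  have "(\<lambda>t. (x t - x' t) - (y t - y' t)) \<in> rl_ideal" using assms unfolding rl_eq_def by (rule ideal_diff)
  then show ?thesis unfolding rl_eq_def by (rule ideal_ext) simp
qed

lemma rl_eq_smult: assumes "rl_eq x x'" shows "rl_eq (\<lambda>t. k * x t) (\<lambda>t. k * x' t)"
proof -
  have "(\<lambda>t. k * (x t - x' t)) \<in> rl_ideal" using assms unfolding rl_eq_def by (rule ideal_smult)
  then show ?thesis unfolding rl_eq_def by (rule ideal_ext) (simp add: algebra_simps)
qed

lemma rl_eq_ideal: "p \<in> rl_ideal \<Longrightarrow> rl_eq p (\<lambda>_. 0)"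
  unfolding rl_eq_def by simp

lemma rl_eq_fin: "rl_eq x y \<Longrightarrow> fin_supp y \<Longrightarrow> fin_supp x"
proof -
  assume "rl_eq x y" "fin_supp y"
  then have "fin_supp (\<lambda>t. (x t - y t) + y t)"
    by (intro fin_supp_add) (auto simp: rl_eq_def ideal_fin)
  then show ?thesis by simp
qed

lemma mmul_add_left: "mmul (\<lambda>t. p t + q t) a = (\<lambda>t. mmul p a t + mmul q a t)"
  by (rule ext) (simp add: mmul_def algebra_simps split: btree.split)
lemma mmul_add_right: "mmul a (\<lambda>t. p t + q t) = (\<lambda>t. mmul a p t + mmul a q t)"
  by (rule ext) (simp add: mmul_def algebra_simps split: btree.split)
lemma mmul_diff_left: "mmul (\<lambda>t. p t - q t) a = (\<lambda>t. mmul p a t - mmul q a t)"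
  by (rule ext) (simp add: mmul_def algebra_simps split: btree.split)
lemma mmul_diff_right: "mmul a (\<lambda>t. p t - q t) = (\<lambda>t. mmul a p t - mmul a q t)"
  by (rule ext) (simp add: mmul_def algebra_simps split: btree.split)
lemma mmul_smult_left: "mmul (\<lambda>t. k * p t) a = (\<lambda>t. k * mmul p a t)"
  by (rule ext) (simp add: mmul_def algebra_simps split: btree.split)
lemma mmul_smult_right: "mmul a (\<lambda>t. k * p t) = (\<lambda>t. k * mmul a p t)"
  by (rule ext) (simp add: mmul_def algebra_simps split: btree.split)
lemma mmul_neg_left: "mmul (\<lambda>t. - p t) a = (\<lambda>t. - mmul p a t)"
  by (rule ext) (simp add: mmul_def algebra_simps split: btree.split)
lemma mmul_neg_right: "mmul a (\<lambda>t. - p t) = (\<lambda>t. - mmul a p t)"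
  by (rule ext) (simp add: mmul_def algebra_simps split: btree.split)
lemma mmul_zero_left: "mmul (\<lambda>_. 0) a = (\<lambda>_. 0)"
  by (rule ext) (simp add: mmul_def split: btree.split)
lemma mmul_zero_right: "mmul a (\<lambda>_. 0) = (\<lambda>_. 0)"
  by (rule ext) (simp add: mmul_def split: btree.split)

lemma mmul_sum_left: "finite I \<Longrightarrow> mmul (\<lambda>t. \<Sum>i\<in>I. f i t) a = (\<lambda>t. \<Sum>i\<in>I. mmul (f i) a t)"
  by (induct rule: finite_induct) (simp_all add: mmul_zero_left mmul_add_left)
lemma mmul_sum_right: "finite I \<Longrightarrow> mmul a (\<lambda>t. \<Sum>i\<in>I. f i t) = (\<lambda>t. \<Sum>i\<in>I. mmul a (f i) t)"
  by (induct rule: finite_induct) (simp_all add: mmul_zero_right mmul_add_right)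

lemma rl_eq_mmul_left: "fin_supp a \<Longrightarrow> rl_eq x y \<Longrightarrow> rl_eq (mmul a x) (mmul a y)"
  unfolding rl_eq_def using rl_ideal.mult_left by (fastforce simp: mmul_diff_right[symmetric])
lemma rl_eq_mmul_right: "fin_supp a \<Longrightarrow> rl_eq x y \<Longrightarrow> rl_eq (mmul x a) (mmul y a)"
  unfolding rl_eq_def using rl_ideal.mult_right by (fastforce simp: mmul_diff_left[symmetric])

lemma anticomm: "fin_supp a \<Longrightarrow> fin_supp b \<Longrightarrow> rl_eq (mmul a b) (\<lambda>t. - mmul b a t)"
proof -
  assume a: "fin_supp a" and b: "fin_supp b"
  have "mmul (\<lambda>t. a t + b t) (\<lambda>t. a t + b t) \<in> rl_ideal"
    by (rule rl_ideal.alt) (rule fin_supp_add[OF a b])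
  moreover have "mmul a a \<in> rl_ideal" "mmul b b \<in> rl_ideal" using a b by (auto intro: rl_ideal.alt)
  ultimately have "(\<lambda>t. mmul (\<lambda>t. a t + b t) (\<lambda>t. a t + b t) t - mmul a a t - mmul b b t) \<in> rl_ideal"
    by (intro ideal_diff)
  then show ?thesis unfolding rl_eq_def
    by (rule ideal_ext) (simp add: mmul_add_left mmul_add_right)
qed

lemma jacobi': "fin_supp a \<Longrightarrow> fin_supp b \<Longrightarrow> fin_supp c \<Longrightarrow>
  rl_eq (mmul a (mmul b c)) (\<lambda>t. mmul (mmul a b) c t - mmul (mmul a c) b t)"
proof -
  assume a: "fin_supp a" and b: "fin_supp b" and c: "fin_supp c"
  let ?J = "\<lambda>t. mmul a (mmul b c) t + mmul b (mmul c a) t + mmul c (mmul a b) t"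
  have J: "?J \<in> rl_ideal" using a b c by (rule rl_ideal.jacobi)
  have 1: "(\<lambda>t. mmul b (mmul c a) t + mmul (mmul c a) b t) \<in> rl_ideal"
    using anticomm[OF b fin_supp_mmul[OF c a]] by (auto simp: rl_eq_def)
  have "(\<lambda>t. mmul c a t + mmul a c t) \<in> rl_ideal" using anticomm[OF c a] by (auto simp: rl_eq_def)
  then have 2: "(\<lambda>t. mmul (mmul c a) b t + mmul (mmul a c) b t) \<in> rl_ideal"
    using rl_ideal.mult_right[OF b] by (fastforce simp: mmul_add_left)
  have 3: "(\<lambda>t. mmul c (mmul a b) t + mmul (mmul a b) c t) \<in> rl_ideal"
    using anticomm[OF c fin_supp_mmul[OF a b]] by (auto simp: rl_eq_def)
  have "(\<lambda>t. ?J t - (mmul b (mmul c a) t + mmul (mmul c a) b t) + (mmul (mmul c a) b t + mmul (mmul a c) b t)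
      - (mmul c (mmul a b) t + mmul (mmul a b) c t)) \<in> rl_ideal"
    by (rule ideal_diff[OF rl_ideal.add[OF ideal_diff[OF J 1] 2] 3])
  then show ?thesis unfolding rl_eq_def by (rule ideal_ext) (simp add: algebra_simps)
qed

definition comb :: "('b \<Rightarrow> ('a btree \<Rightarrow> int)) \<Rightarrow> ('b \<Rightarrow> int) \<Rightarrow> ('a btree \<Rightarrow> int)" where
  "comb F c = (\<lambda>t. \<Sum>w\<in>{w. c w \<noteq> 0}. c w * F w t)"

definition inspan :: "('b \<Rightarrow> ('a btree \<Rightarrow> int)) \<Rightarrow> 'b set \<Rightarrow> ('a btree \<Rightarrow> int) \<Rightarrow> bool" where
  "inspan F S x \<longleftrightarrow> (\<exists>c. finite {w. c w \<noteq> 0} \<and> {w. c w \<noteq> 0} \<subseteq> S \<and> rl_eq x (comb F c))"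

lemma comb_superset: "finite A \<Longrightarrow> {w. c w \<noteq> 0} \<subseteq> A \<Longrightarrow> comb F c t = (\<Sum>w\<in>A. c w * F w t)"
  unfolding comb_def by (rule sum.mono_neutral_left) auto

lemma inspan_zero: "inspan F S (\<lambda>_. 0)"
  unfolding inspan_def by (rule exI[of _ "\<lambda>_. 0"]) (simp add: comb_def rl_eq_refl)

lemma inspan_gen: "w \<in> S \<Longrightarrow> inspan F S (F w)"
  unfolding inspan_def
proof (rule exI[of _ "\<lambda>v. if v = w then 1 else 0"])
  assume "w \<in> S"
  have "{v. (if v = w then 1 else 0) \<noteq> (0::int)} = {w}" by auto
  then show "finite {v. (if v = w then 1 else 0) \<noteq> (0::int)} \<and> {v. (if v = w then 1 else 0) \<noteq> (0::int)} \<subseteq> S \<and>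
      rl_eq (F w) (comb F (\<lambda>v. if v = w then 1 else 0))"
    using \<open>w \<in> S\<close> by (simp add: comb_def rl_eq_refl)
qed

lemma inspan_add: "inspan F S x \<Longrightarrow> inspan F S y \<Longrightarrow> inspan F S (\<lambda>t. x t + y t)"
proof -
  assume "inspan F S x" "inspan F S y"
  then obtain c d where c: "finite {w. c w \<noteq> 0}" "{w. c w \<noteq> 0} \<subseteq> S" "rl_eq x (comb F c)"
    and d: "finite {w. d w \<noteq> 0}" "{w. d w \<noteq> 0} \<subseteq> S" "rl_eq y (comb F d)"
    unfolding inspan_def by blast
  let ?A = "{w. c w \<noteq> 0} \<union> {w. d w \<noteq> 0}"
  let ?e = "\<lambda>w. c w + d w"
  have fA: "finite ?A" using c d by simp
  have s1: "{w. ?e w \<noteq> 0} \<subseteq> ?A" "{w. c w \<noteq> 0} \<subseteq> ?A" "{w. d w \<noteq> 0} \<subseteq> ?A" by auto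
  have "comb F ?e t = comb F c t + comb F d t" for t
    using comb_superset[OF fA s1(1), where F=F and t=t] comb_superset[OF fA s1(2), where F=F and t=t]
      comb_superset[OF fA s1(3), where F=F and t=t]
    by (auto simp: sum.distrib distrib_right)
  then have "comb F ?e = (\<lambda>t. comb F c t + comb F d t)" by (rule ext)
  moreover have "finite {w. ?e w \<noteq> 0}" by (rule finite_subset[OF _ fA]) auto
  moreover have "{w. ?e w \<noteq> 0} \<subseteq> S" using c(2) d(2) s1(1) by blast
  ultimately show ?thesis unfolding inspan_def using rl_eq_add[OF c(3) d(3)] by metis
qed

lemma inspan_smult: "inspan F S x \<Longrightarrow> inspan F S (\<lambda>t. k * x t)"
proof -
  assume "inspan F S x"
  then obtain c where c: "finite {w. c w \<noteq> 0}" "{w. c w \<noteq> 0} \<subseteq> S" "rl_eq x (comb F c)"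
    unfolding inspan_def by blast
  let ?e = "\<lambda>w. k * c w"
  have s1: "{w. ?e w \<noteq> 0} \<subseteq> {w. c w \<noteq> 0}" by auto
  have "comb F ?e t = k * comb F c t" for t
    using comb_superset[OF c(1) s1, where F=F and t=t] comb_superset[OF c(1) order_refl, where F=F and t=t]
    by (auto simp: sum_distrib_left mult.assoc)
  then have "comb F ?e = (\<lambda>t. k * comb F c t)" by (rule ext)
  moreover have "finite {w. ?e w \<noteq> 0}" by (rule finite_subset[OF _ c(1)]) auto
  moreover have "{w. ?e w \<noteq> 0} \<subseteq> S" using c by auto
  ultimately show ?thesis unfolding inspan_def using rl_eq_smult[OF c(3), of k] by metis
qed

lemma inspan_neg: "inspan F S x \<Longrightarrow> inspan F S (\<lambda>t. - x t)"
  using inspan_smult[of F S x "-1"] by simp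

lemma inspan_diff: "inspan F S x \<Longrightarrow> inspan F S y \<Longrightarrow> inspan F S (\<lambda>t. x t - y t)"
  using inspan_add[of F S x "\<lambda>t. - y t"] inspan_neg[of F S y] by simp

lemma inspan_cong: "rl_eq x y \<Longrightarrow> inspan F S y \<Longrightarrow> inspan F S x"
  unfolding inspan_def using rl_eq_trans by blast

lemma inspan_mono: "inspan F S x \<Longrightarrow> S \<subseteq> S' \<Longrightarrow> inspan F S' x"
  unfolding inspan_def by blast

lemma inspan_sum: "finite I \<Longrightarrow> (\<And>i. i \<in> I \<Longrightarrow> inspan F S (f i)) \<Longrightarrow> inspan F S (\<lambda>t. \<Sum>i\<in>I. f i t)"
proof (induct rule: finite_induct)
  case empty then show ?case by (simp add: inspan_zero)
next
  case (insert x F') then show ?case by (simp add: inspan_add)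
qed

lemma inspan_comb: "finite {w. c w \<noteq> 0} \<Longrightarrow> (\<And>w. c w \<noteq> 0 \<Longrightarrow> inspan G S' (F w)) \<Longrightarrow> inspan G S' (comb F c)"
  unfolding comb_def by (rule inspan_sum) (auto intro: inspan_smult)

lemma inspan_trans: "inspan F S x \<Longrightarrow> (\<And>w. w \<in> S \<Longrightarrow> inspan G S' (F w)) \<Longrightarrow> inspan G S' x"
proof -
  assume "inspan F S x" and h: "\<And>w. w \<in> S \<Longrightarrow> inspan G S' (F w)"
  then obtain c where c: "finite {w. c w \<noteq> 0}" "{w. c w \<noteq> 0} \<subseteq> S" "rl_eq x (comb F c)"
    unfolding inspan_def by blast
  have "inspan G S' (comb F c)" using c h by (intro inspan_comb) auto
  then show ?thesis using c(3) inspan_cong by blast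
qed

lemma fin_supp_comb: "finite {w. c w \<noteq> 0} \<Longrightarrow> (\<And>w. fin_supp (F w)) \<Longrightarrow> fin_supp (comb F c)"
  unfolding comb_def by (rule fin_supp_sum) (auto intro: fin_supp_smult)

lemma inspan_mmul_right:
  assumes "inspan F S x" "fin_supp a" "\<And>w. w \<in> S \<Longrightarrow> inspan G S' (mmul (F w) a)"
  shows "inspan G S' (mmul x a)"
proof -
  obtain c where c: "finite {w. c w \<noteq> 0}" "{w. c w \<noteq> 0} \<subseteq> S" "rl_eq x (comb F c)"
    using assms(1) unfolding inspan_def by blast
  have "mmul (comb F c) a = (\<lambda>t. \<Sum>w\<in>{w. c w \<noteq> 0}. c w * mmul (F w) a t)"
    unfolding comb_def mmul_sum_left[OF c(1)] by (simp add: mmul_smult_left)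
  moreover have "inspan G S' (\<lambda>t. \<Sum>w\<in>{w. c w \<noteq> 0}. c w * mmul (F w) a t)"
    using c assms(3) by (intro inspan_sum inspan_smult) auto
  moreover have "rl_eq (mmul x a) (mmul (comb F c) a)" by (rule rl_eq_mmul_right[OF assms(2) c(3)])
  ultimately show ?thesis using inspan_cong by metis
qed

lemma inspan_mmul_left:
  assumes "inspan F S x" "fin_supp a" "\<And>w. w \<in> S \<Longrightarrow> inspan G S' (mmul a (F w))"
  shows "inspan G S' (mmul a x)"
proof -
  obtain c where c: "finite {w. c w \<noteq> 0}" "{w. c w \<noteq> 0} \<subseteq> S" "rl_eq x (comb F c)"
    using assms(1) unfolding inspan_def by blast
  have "mmul a (comb F c) = (\<lambda>t. \<Sum>w\<in>{w. c w \<noteq> 0}. c w * mmul a (F w) t)"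
    unfolding comb_def mmul_sum_right[OF c(1)] by (simp add: mmul_smult_right)
  moreover have "inspan G S' (\<lambda>t. \<Sum>w\<in>{w. c w \<noteq> 0}. c w * mmul a (F w) t)"
    using c assms(3) by (intro inspan_sum inspan_smult) auto
  moreover have "rl_eq (mmul a x) (mmul a (comb F c))" by (rule rl_eq_mmul_left[OF assms(2) c(3)])
  ultimately show ?thesis using inspan_cong by metis
qed

lemma Phi_comb:
  assumes "finite {w. c w \<noteq> 0}" "\<And>w. fin_supp (F w)"
  shows "Phi (comb F c) x = (\<Sum>w\<in>{w. c w \<noteq> 0}. c w * Phi (F w) x)"
  unfolding comb_def using assms by (simp add: Phi_sum fin_supp_smult Phi_smult)

fun lnr :: "'a list \<Rightarrow> ('a btree \<Rightarrow> int)" where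
  "lnr [] = (\<lambda>_. 0)"
| "lnr [y] = gen y"
| "lnr (y # z # zs) = mmul (lnr (z # zs)) (gen y)"

definition LN :: "'a list \<Rightarrow> ('a btree \<Rightarrow> int)" where
  "LN w = lnr (rev w)"

lemma LN_single: "LN [y] = gen y"
  by (simp add: LN_def)

lemma LN_snoc: "w \<noteq> [] \<Longrightarrow> LN (w @ [c]) = mmul (LN w) (gen c)"
  by (cases "rev w") (auto simp: LN_def)

lemma fin_supp_lnr: "fin_supp (lnr w)"
  by (induct w rule: lnr.induct) (auto simp: fin_supp_zero fin_supp_gen fin_supp_mmul)

lemma fin_supp_LN: "fin_supp (LN w)"
  by (simp add: LN_def fin_supp_lnr)

lemma rnorm_Cons: "ys \<noteq> [] \<Longrightarrow> rnorm (y # ys) = mmul (gen y) (rnorm ys)"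
  by (cases ys) auto

lemma LN_bracket:
  "u \<noteq> [] \<Longrightarrow> v \<noteq> [] \<Longrightarrow>
   inspan LN {w. \<exists>v'. w = u @ v' \<and> mset v' = mset v} (mmul (LN u) (LN v))"
proof (induct v arbitrary: u rule: rev_induct)
  case Nil then show ?case by simp
next
  case (snoc c v0)
  let ?T = "{w. \<exists>v'. w = u @ v' \<and> mset v' = mset (v0 @ [c])}"
  show ?case
  proof (cases "v0 = []")
    case True
    have "mmul (LN u) (LN (v0 @ [c])) = LN (u @ [c])"
      using True snoc.prems by (simp add: LN_single LN_snoc)
    moreover have "u @ [c] \<in> ?T" using True by auto
    ultimately show ?thesis by (simp add: inspan_gen)
  next
    case False
    have LNv: "LN (v0 @ [c]) = mmul (LN v0) (gen c)" using False by (rule LN_snoc)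
    have J: "rl_eq (mmul (LN u) (LN (v0 @ [c])))
        (\<lambda>t. mmul (mmul (LN u) (LN v0)) (gen c) t - mmul (mmul (LN u) (gen c)) (LN v0) t)"
      unfolding LNv by (rule jacobi') (simp_all add: fin_supp_LN fin_supp_gen)
    have X1: "inspan LN ?T (mmul (mmul (LN u) (LN v0)) (gen c))"
    proof (rule inspan_mmul_right[OF snoc.hyps[OF snoc.prems(1) False] fin_supp_gen])
      fix w assume "w \<in> {w. \<exists>v'. w = u @ v' \<and> mset v' = mset v0}"
      then obtain v' where v': "w = u @ v'" "mset v' = mset v0" by blast
      have "w \<noteq> []" using v' snoc.prems by simp
      then have "mmul (LN w) (gen c) = LN (w @ [c])" by (simp add: LN_snoc)
      moreover have "w @ [c] \<in> ?T" using v' by (auto intro!: exI[of _ "v' @ [c]"])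
      ultimately show "inspan LN ?T (mmul (LN w) (gen c))" by (simp add: inspan_gen)
    qed
    have "inspan LN {w. \<exists>v'. w = (u @ [c]) @ v' \<and> mset v' = mset v0} (mmul (LN (u @ [c])) (LN v0))"
      by (rule snoc.hyps) (use False in auto)
    moreover have "{w. \<exists>v'. w = (u @ [c]) @ v' \<and> mset v' = mset v0} \<subseteq> ?T"
    proof
      fix w assume "w \<in> {w. \<exists>v'. w = (u @ [c]) @ v' \<and> mset v' = mset v0}"
      then obtain v' where "w = (u @ [c]) @ v'" "mset v' = mset v0" by blast
      then show "w \<in> ?T" by (intro CollectI exI[of _ "c # v'"]) simp
    qed
    ultimately have X2: "inspan LN ?T (mmul (mmul (LN u) (gen c)) (LN v0))"
      using snoc.prems by (simp add: LN_snoc inspan_mono)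
    show ?thesis using inspan_cong[OF J inspan_diff[OF X1 X2]] .
  qed
qed

definition Wm :: "'a multiset \<Rightarrow> 'a list set" where
  "Wm M = {w. mset w = M}"

lemma inspan_W_mmul:
  assumes hx: "inspan LN (Wm M1) x" and hy: "inspan LN (Wm M2) y"
    and M: "M1 \<noteq> {#}" "M2 \<noteq> {#}" and fy: "fin_supp y"
  shows "inspan LN (Wm (M1 + M2)) (mmul x y)"
proof (rule inspan_mmul_right[OF hx fy])
  fix u assume u: "u \<in> Wm M1"
  show "inspan LN (Wm (M1 + M2)) (mmul (LN u) y)"
  proof (rule inspan_mmul_left[OF hy fin_supp_LN])
    fix v assume v: "v \<in> Wm M2"
    have "u \<noteq> []" "v \<noteq> []" using u v M by (auto simp: Wm_def)
    from LN_bracket[OF this]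
    show "inspan LN (Wm (M1 + M2)) (mmul (LN u) (LN v))"
      by (rule inspan_mono) (use u v in \<open>auto simp: Wm_def\<close>)
  qed
qed

lemma lyn_mon_W: "w \<noteq> [] \<Longrightarrow> inspan LN (Wm (mset w)) (lyn_mon (w::'a::linorder list))"
proof (induct "length w" arbitrary: w rule: less_induct)
  case less
  show ?case
  proof (cases "length w \<le> 1")
    case True
    then obtain y where w: "w = [y]" using less.prems by (cases w) auto
    have "lyn_mon w = LN [y]" using w by (simp add: lyn_mon_short LN_single)
    then show ?thesis using w by (simp add: inspan_gen Wm_def)
  next
    case False
    then have l2: "2 \<le> length w" by simp
    note uv = lyn_uv[OF l2]
    have wuv: "lyn_u w @ lyn_v w = w" using uv(1) by metis
    have "inspan LN (Wm (mset (lyn_u w))) (lyn_mon (lyn_u w))" using less.hyps[OF uv(4) uv(2)] .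
    moreover have "inspan LN (Wm (mset (lyn_v w))) (lyn_mon (lyn_v w))" using less.hyps[OF uv(5) uv(3)] .
    ultimately have "inspan LN (Wm (mset (lyn_u w) + mset (lyn_v w))) (mmul (lyn_mon (lyn_u w)) (lyn_mon (lyn_v w)))"
      by (rule inspan_W_mmul) (use uv(2,3) in \<open>auto simp: fin_supp_lyn_mon\<close>)
    moreover have "mset (lyn_u w) + mset (lyn_v w) = mset w" by (metis wuv mset_append)
    ultimately show ?thesis by (simp add: lyn_mon_long[OF l2])
  qed
qed

fun leaves :: "'a btree \<Rightarrow> 'a list" where
  "leaves (Leaf y) = [y]"
| "leaves (Br s t) = leaves s @ leaves t"

definition gt :: "'a btree \<Rightarrow> ('a btree \<Rightarrow> int)" where
  "gt t = (\<lambda>s. if s = t then 1 else 0)"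

lemma leaves_ne: "leaves t \<noteq> []"
  by (induct t) auto

lemma nleaves_leaves: "nleaves t = length (leaves t)"
  by (induct t) auto

lemma fin_supp_gt: "fin_supp (gt t)"
  by (simp add: fin_supp_def gt_def)

lemma gt_Br: "gt (Br s t) = mmul (gt s) (gt t)"
  by (rule ext) (simp add: gt_def mmul_def split: btree.split)

lemma gt_W: "inspan LN (Wm (mset (leaves t))) (gt t)"
proof (induct t)
  case (Leaf y)
  have "gt (Leaf y) = LN [y]" by (rule ext) (simp add: gt_def LN_single gen_def)
  then show ?case by (simp add: inspan_gen Wm_def)
next
  case (Br s t)
  show ?case unfolding gt_Br
    by (simp, rule inspan_W_mmul) (use Br leaves_ne in \<open>auto simp: fin_supp_gt\<close>)
qed

lemma LN_rnorm: "w \<noteq> [] \<Longrightarrow> rl_eq (LN w) (\<lambda>t. (-1) ^ (length w - 1) * rnorm (rev w) t)"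
proof (induct w rule: rev_induct)
  case Nil then show ?case by simp
next
  case (snoc c w)
  show ?case
  proof (cases "w = []")
    case True then show ?thesis by (simp add: LN_single rl_eq_refl)
  next
    case False
    let ?s = "(-1::int) ^ (length w - 1)"
    have "rl_eq (LN (w @ [c])) (\<lambda>t. - mmul (gen c) (LN w) t)"
      unfolding LN_snoc[OF False] by (rule anticomm) (simp_all add: fin_supp_LN fin_supp_gen)
    moreover have "rl_eq (mmul (gen c) (LN w)) (mmul (gen c) (\<lambda>t. ?s * rnorm (rev w) t))"
      by (rule rl_eq_mmul_left[OF fin_supp_gen snoc.hyps[OF False]])
    then have e1: "rl_eq (mmul (gen c) (LN w)) (\<lambda>t. ?s * rnorm (c # rev w) t)"
      using False by (simp add: mmul_smult_right rnorm_Cons)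
    have e2: "rl_eq (\<lambda>t. - mmul (gen c) (LN w) t) (\<lambda>t. - (?s * rnorm (c # rev w) t))"
      using rl_eq_smult[OF e1, of "-1"] by simp
    ultimately have e3: "rl_eq (LN (w @ [c])) (\<lambda>t. - (?s * rnorm (c # rev w) t))"
      using rl_eq_trans by blast
    have sg: "(-1) ^ (length (w @ [c]) - 1) = - ?s"
      using False by (cases "length w") auto
    have rv: "rev (w @ [c]) = c # rev w" by simp
    have "(\<lambda>t. - (?s * rnorm (c # rev w) t)) = (\<lambda>t. (-1) ^ (length (w @ [c]) - 1) * rnorm (rev (w @ [c])) t)"
      by (intro ext) (simp only: sg rv mult_minus_left)
    then show ?thesis using e3 by simp
  qed
qed

lemma LN_zero: "2 \<le> length w \<Longrightarrow> \<not> distinct w \<Longrightarrow> rl_eq (LN w) (\<lambda>_. 0)"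
proof -
  assume a: "2 \<le> length w" "\<not> distinct w"
  have "rnorm (rev w) \<in> rl_ideal" using a by (intro rl_ideal.rep) auto
  then have "(\<lambda>t. (-1) ^ (length w - 1) * rnorm (rev w) t) \<in> rl_ideal" by (rule ideal_smult)
  then show ?thesis using LN_rnorm[of w] a rl_eq_trans rl_eq_ideal by fastforce
qed

lemma LN_ext:
  assumes "p \<noteq> []" "inspan LN S (LN p)" "\<And>w. w \<in> S \<Longrightarrow> w \<noteq> []"
  shows "inspan LN ((\<lambda>w. w @ b) ` S) (LN (p @ b))"
proof (induct b rule: rev_induct)
  case Nil then show ?case using assms by simp
next
  case (snoc c b)
  have "LN (p @ b @ [c]) = mmul (LN (p @ b)) (gen c)" using assms(1) LN_snoc[of "p @ b" c] by simp
  moreover have "inspan LN ((\<lambda>w. w @ b @ [c]) ` S) (mmul (LN (p @ b)) (gen c))"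
  proof (rule inspan_mmul_right[OF snoc fin_supp_gen])
    fix w' assume "w' \<in> (\<lambda>w. w @ b) ` S"
    then obtain w where w: "w \<in> S" "w' = w @ b" by blast
    have "mmul (LN w') (gen c) = LN (w @ b @ [c])" using w assms(3)[OF w(1)] LN_snoc[of w' c] by simp
    moreover have "w @ b @ [c] \<in> (\<lambda>w. w @ b @ [c]) ` S" using w by blast
    ultimately show "inspan LN ((\<lambda>w. w @ b @ [c]) ` S) (mmul (LN w') (gen c))" by (simp add: inspan_gen)
  qed
  ultimately show ?case by simp
qed

lemma LN_front:
  assumes "m \<in> set w"
  shows "inspan LN {w'. mset w' = mset w \<and> hd w' = m} (LN w)"
proof -
  obtain a b where w: "w = a @ m # b" using assms by (meson split_list)
  let ?D = "{w'. mset w' = mset w \<and> hd w' = m}"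
  show ?thesis
  proof (cases "a = []")
    case True
    then show ?thesis using w by (simp add: inspan_gen)
  next
    case False
    let ?S0 = "{w. \<exists>v'. w = [m] @ v' \<and> mset v' = mset a}"
    have "rl_eq (LN (a @ [m])) (\<lambda>t. - mmul (gen m) (LN a) t)"
      unfolding LN_snoc[OF False] by (rule anticomm) (simp_all add: fin_supp_LN fin_supp_gen)
    moreover have "inspan LN ?S0 (mmul (LN [m]) (LN a))" by (rule LN_bracket) (use False in auto)
    ultimately have h: "inspan LN ?S0 (LN (a @ [m]))"
      by (simp add: LN_single inspan_cong inspan_neg)
    have "inspan LN ((\<lambda>w. w @ b) ` ?S0) (LN ((a @ [m]) @ b))"
      by (rule LN_ext[OF _ h]) auto
    moreover have "(\<lambda>w. w @ b) ` ?S0 \<subseteq> ?D" using w by auto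
    ultimately show ?thesis using w by (simp add: inspan_mono)
  qed
qed

lemma Phi_LN_snoc: "w \<noteq> [] \<Longrightarrow> Phi (LN (w @ [c])) = brk (Phi (LN w)) (T (Leaf c))"
  by (rule ext) (simp add: LN_snoc Phi_mmul fin_supp_LN fin_supp_gen Phi_gen)

lemma msupp_LN: "w \<noteq> [] \<Longrightarrow> msupp (mset w) (Phi (LN w))"
proof (induct w rule: rev_induct)
  case Nil then show ?case by simp
next
  case (snoc c w)
  show ?case
  proof (cases "w = []")
    case True then show ?thesis by (simp add: LN_single Phi_gen msupp_def)
  next
    case False
    have "msupp (mset w + {#c#}) (brk (Phi (LN w)) (T (Leaf c)))"
      by (rule msupp_brk) (use snoc False in \<open>auto simp: msupp_def\<close>)
    then show ?thesis using False by (simp add: Phi_LN_snoc)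
  qed
qed

lemma lead_LN: "distinct w \<Longrightarrow> w \<noteq> [] \<Longrightarrow>
   Phi (LN w) w = 1 \<and> (\<forall>x. Phi (LN w) x \<noteq> 0 \<longrightarrow> x = w \<or> hd x \<noteq> hd w)"
proof (induct w rule: rev_induct)
  case Nil then show ?case by simp
next
  case (snoc c w)
  show ?case
  proof (cases "w = []")
    case True then show ?thesis by (simp add: LN_single Phi_gen)
  next
    case False
    let ?A = "Phi (LN w)" and ?D = "T (Leaf c) :: 'a list \<Rightarrow> int"
    have IH: "?A w = 1" "\<And>x. ?A x \<noteq> 0 \<Longrightarrow> x = w \<or> hd x \<noteq> hd w" using snoc False by auto
    have ms: "\<And>x. ?A x \<noteq> 0 \<Longrightarrow> mset x = mset w" using msupp_LN[OF False] by (auto simp: msupp_def)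
    have cw: "c \<notin> set w" using snoc.prems by simp
    have hdw: "hd (w @ [c]) = hd w" using False by simp
    have hdin: "hd w \<in> set w" using False by simp
    have P: "Phi (LN (w @ [c])) = brk ?A ?D" using False by (rule Phi_LN_snoc)
    have c1: "conv ?A ?D (w @ [c]) = 1"
    proof -
      have lA: "\<And>x. ?A x \<noteq> 0 \<Longrightarrow> length x = length w" using ms by (metis size_mset)
      show ?thesis using conv_at_split[of ?A w ?D "[c]", OF lA] IH by simp
    qed
    have c2: "conv ?D ?A x \<noteq> 0 \<Longrightarrow> hd x = c" for x
    proof -
      assume "conv ?D ?A x \<noteq> 0"
      from conv_nonzero[OF this] obtain i where "?D (take i x) \<noteq> 0" by blast
      then have "take i x = [c]" by (simp split: if_splits)
      then have "hd (take i x @ drop i x) = c" by simp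
      then show "hd x = c" by simp
    qed
    show ?thesis
    proof (intro conjI allI impI)
      have "conv ?D ?A (w @ [c]) = 0" using c2[of "w @ [c]"] hdw hdin cw by auto
      then show "Phi (LN (w @ [c])) (w @ [c]) = 1" using P c1 by (simp add: brk_def)
      fix x assume "Phi (LN (w @ [c])) x \<noteq> 0"
      then have "conv ?A ?D x \<noteq> 0 \<or> conv ?D ?A x \<noteq> 0" using P by (auto simp: brk_def)
      then show "x = w @ [c] \<or> hd x \<noteq> hd (w @ [c])"
      proof
        assume "conv ?A ?D x \<noteq> 0"
        from conv_nonzero[OF this] obtain i where i: "?A (take i x) \<noteq> 0" "?D (drop i x) \<noteq> 0" by blast
        have d: "drop i x = [c]" using i(2) by (simp split: if_splits)
        have tne: "take i x \<noteq> []"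
        proof
          assume "take i x = []" then have "mset w = {#}" using ms[OF i(1)] by (simp del: take_eq_Nil)
          then show False using False by simp
        qed
        have "take i x = w \<or> hd (take i x) \<noteq> hd w" using IH(2)[OF i(1)] .
        then show ?thesis
        proof
          assume "take i x = w" then have "x = w @ [c]" using append_take_drop_id[of i x] d by simp
          then show ?thesis by simp
        next
          assume "hd (take i x) \<noteq> hd w"
          moreover have "hd (take i x @ drop i x) = hd (take i x)" using tne by simp
          then have "hd (take i x) = hd x" by simp
          ultimately show ?thesis using hdw by simp
        qed
      next
        assume "conv ?D ?A x \<noteq> 0"
        then have "hd x = c" by (rule c2)
        then show ?thesis using hdw hdin cw by auto
      qed
    qed
  qed
qed

section \<open>Linear independence\<close>

lemma lyn_comb_comb: "lyn_comb c = comb lyn_mon c"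
  by (simp add: lyn_comb_def comb_def)

lemma part1:
  fixes c :: "'a::linorder list \<Rightarrow> int"
  assumes fc: "finite {w. c w \<noteq> 0}" and lc: "\<forall>w. c w \<noteq> 0 \<longrightarrow> lyndon w \<and> distinct w"
    and eq: "rl_eq (lyn_comb c) (\<lambda>_. 0)"
  shows "\<forall>w. c w = 0"
proof (rule ccontr)
  let ?S = "{w. c w \<noteq> 0}"
  assume "\<not> (\<forall>w. c w = 0)"
  then have "?S \<noteq> {}" by auto
  from word_min_exists[OF fc this] obtain w0 where w0: "w0 \<in> ?S" "\<forall>x\<in>?S. \<not> word_less x w0" by blast
  have dw0: "distinct w0" using lc w0 by auto
  have fcomb: "fin_supp (comb lyn_mon c)" by (rule fin_supp_comb[OF fc fin_supp_lyn_mon])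
  have "Phi (comb lyn_mon c) w0 = Phi (\<lambda>_. 0) w0"
    by (rule rl_eq_Phi) (use eq fcomb dw0 in \<open>auto simp: lyn_comb_comb fin_supp_zero\<close>)
  then have "0 = (\<Sum>w\<in>?S. c w * Phi (lyn_mon w) w0)"
    by (simp add: Phi_zero Phi_comb[OF fc fin_supp_lyn_mon])
  also have "\<dots> = (\<Sum>w\<in>?S. if w = w0 then c w else 0)"
  proof (rule sum.cong[OF refl])
    fix w assume w: "w \<in> ?S"
    have t: "tri w (Phi (lyn_mon w))" using lc w by (auto intro: tri_lyn_mon)
    show "c w * Phi (lyn_mon w) w0 = (if w = w0 then c w else 0)"
    proof (cases "w = w0")
      case True then show ?thesis using t by (simp add: tri_def)
    next
      case False
      have "Phi (lyn_mon w) w0 = 0"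
      proof (rule ccontr)
        assume "Phi (lyn_mon w) w0 \<noteq> 0"
        then have "w0 = w \<or> word_less w w0" using t by (auto simp: tri_def)
        then show False using False w w0(2) by auto
      qed
      then show ?thesis using False by simp
    qed
  qed
  also have "\<dots> = c w0" using fc w0(1) by simp
  finally show False using w0(1) by simp
qed

section \<open>Spanning\<close>

definition Dz :: "'a list \<Rightarrow> 'a \<Rightarrow> 'a list set" where
  "Dz z m = {w. mset w = mset z \<and> hd w = m}"

lemma Dz_props:
  fixes z :: "'a::linorder list"
  assumes z: "distinct z" "m \<in> set z" "\<forall>x\<in>set z. m \<le> x" and w: "w \<in> Dz z m"
  shows "distinct w" "w \<noteq> []" "set w = set z" "lyndon w" "length w = length z" "hd w = m"
proof -
  have ms: "mset w = mset z" "hd w = m" using w by (auto simp: Dz_def)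
  show d: "distinct w" using ms z mset_eq_imp_distinct_iff by blast
  show sw: "set w = set z" using ms(1) by (rule mset_eq_setD)
  show ne: "w \<noteq> []" using sw z by auto
  show "length w = length z" using ms by (metis size_mset)
  show "hd w = m" using ms by simp
  show "lyndon w" using distinct_lyndon_iff[OF d] ne sw z ms by auto
qed

lemma finite_Dz: "finite (Dz z m)"
proof (rule finite_subset)
  show "Dz z m \<subseteq> {w. set w \<subseteq> set z \<and> length w = length z}"
    by (auto simp: Dz_def dest: mset_eq_setD) (metis size_mset)
  show "finite {w. set w \<subseteq> set z \<and> length w = length z}"
    by (rule finite_lists_length_eq) simp
qed

lemma LN_orth:
  fixes z :: "'a::linorder list"
  assumes z: "distinct z" "m \<in> set z" "\<forall>x\<in>set z. m \<le> x" and v: "v \<in> Dz z m" and x: "x \<in> Dz z m"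
  shows "Phi (LN v) x = (if x = v then 1 else 0)"
proof -
  note pv = Dz_props[OF z v] and px = Dz_props[OF z x]
  have l: "Phi (LN v) v = 1 \<and> (\<forall>x. Phi (LN v) x \<noteq> 0 \<longrightarrow> x = v \<or> hd x \<noteq> hd v)"
    using lead_LN[OF pv(1) pv(2)] .
  show ?thesis using l pv(6) px(6) by auto
qed

lemma lyn_in_LN:
  fixes z :: "'a::linorder list"
  assumes z: "distinct z" "m \<in> set z" "\<forall>x\<in>set z. m \<le> x" and w: "w \<in> Dz z m"
  shows "inspan LN (Dz z m) (lyn_mon w)"
proof (rule inspan_trans[OF lyn_mon_W])
  note pw = Dz_props[OF z w]
  show "w \<noteq> []" using pw by simp
  fix w' assume "w' \<in> Wm (mset w)"
  then have ms: "mset w' = mset z" using w by (simp add: Wm_def Dz_def)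
  then have "m \<in> set w'" using z(2) by (metis mset_eq_setD)
  from LN_front[OF this] show "inspan LN (Dz z m) (LN w')" using ms by (simp add: Dz_def)
qed

lemma LN_in_P:
  fixes z :: "'a::linorder list"
  assumes z: "distinct z" "m \<in> set z" "\<forall>x\<in>set z. m \<le> x"
  shows "v \<in> Dz z m \<Longrightarrow> inspan lyn_mon (Dz z m) (LN v)"
proof (induct "card {v' \<in> Dz z m. word_less v v'}" arbitrary: v rule: less_induct)
  case less
  let ?D = "Dz z m"
  have vD: "v \<in> ?D" by fact
  obtain c where c: "finite {w. c w \<noteq> 0}" "{w. c w \<noteq> 0} \<subseteq> ?D" "rl_eq (lyn_mon v) (comb LN c)"
    using lyn_in_LN[OF z vD] unfolding inspan_def by blast
  have ev: "Phi (lyn_mon v) x = c x" if x: "x \<in> ?D" for x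
  proof -
    have dx: "distinct x" using Dz_props[OF z x] by simp
    have "Phi (lyn_mon v) x = Phi (comb LN c) x"
      by (rule rl_eq_Phi[OF c(3) fin_supp_lyn_mon fin_supp_comb[OF c(1) fin_supp_LN] dx])
    also have "\<dots> = (\<Sum>w\<in>{w. c w \<noteq> 0}. c w * Phi (LN w) x)" by (rule Phi_comb[OF c(1) fin_supp_LN])
    also have "\<dots> = (\<Sum>w\<in>{w. c w \<noteq> 0}. if x = w then c w else 0)"
    proof (rule sum.cong[OF refl])
      fix w assume "w \<in> {w. c w \<noteq> 0}"
      then have "w \<in> ?D" using c(2) by blast
      then show "c w * Phi (LN w) x = (if x = w then c w else 0)" using LN_orth[OF z _ x] by simp
    qed
    also have "\<dots> = c x" using c(1) by simp
    finally show ?thesis .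
  qed
  have tv: "tri v (Phi (lyn_mon v))" using Dz_props[OF z vD] by (auto intro: tri_lyn_mon)
  have cv: "c v = 1" using ev[OF vD] tv by (simp add: tri_def)
  let ?R = "\<lambda>t. \<Sum>w\<in>{w. c w \<noteq> 0} - {v}. c w * LN w t"
  have decomp: "comb LN c = (\<lambda>t. LN v t + ?R t)"
  proof (rule ext)
    fix t
    have "v \<in> {w. c w \<noteq> 0}" using cv by simp
    from sum.remove[OF c(1) this, of "\<lambda>w. c w * LN w t"]
    show "comb LN c t = LN v t + ?R t"
      unfolding comb_def using cv by simp
  qed
  have Rspan: "inspan lyn_mon ?D ?R"
  proof (rule inspan_sum)
    show "finite ({w. c w \<noteq> 0} - {v})" using c(1) by simp
    fix w assume w: "w \<in> {w. c w \<noteq> 0} - {v}"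
    then have wD: "w \<in> ?D" using c(2) by blast
    have "Phi (lyn_mon v) w \<noteq> 0" using ev[OF wD] w by simp
    then have vw: "word_less v w" using tv w by (auto simp: tri_def)
    have "{v' \<in> ?D. word_less w v'} \<subset> {v' \<in> ?D. word_less v v'}"
    proof
      show "{v' \<in> ?D. word_less w v'} \<subseteq> {v' \<in> ?D. word_less v v'}" using vw word_less_trans by blast
      show "{v' \<in> ?D. word_less w v'} \<noteq> {v' \<in> ?D. word_less v v'}" using vw wD word_less_irrefl by blast
    qed
    then have "card {v' \<in> ?D. word_less w v'} < card {v' \<in> ?D. word_less v v'}"
      by (rule psubset_card_mono[rotated]) (simp add: finite_Dz)
    then have "inspan lyn_mon ?D (LN w)" using less.hyps wD by blast
    then show "inspan lyn_mon ?D (\<lambda>t. c w * LN w t)" by (rule inspan_smult)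
  qed
  have sp: "inspan lyn_mon ?D (\<lambda>t. lyn_mon v t - ?R t)"
    by (rule inspan_diff[OF inspan_gen[OF vD] Rspan])
  have "rl_eq (\<lambda>t. lyn_mon v t - ?R t) (\<lambda>t. (LN v t + ?R t) - ?R t)"
    using rl_eq_diff[OF c(3)[unfolded decomp] rl_eq_refl[of ?R]] .
  then have "rl_eq (LN v) (\<lambda>t. lyn_mon v t - ?R t)" by (simp add: rl_eq_sym)
  then show ?case using sp by (rule inspan_cong)
qed

lemma not_distinct_len: "\<not> distinct w \<Longrightarrow> 2 \<le> length w"
  by (cases w; cases "tl w") auto

lemma gt_span: "inspan lyn_mon {w::'a::linorder list. lyndon w \<and> distinct w \<and> length w = nleaves t} (gt t)"
proof (rule inspan_trans[OF gt_W])
  let ?z = "leaves t"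
  let ?Tg = "{w::'a list. lyndon w \<and> distinct w \<and> length w = nleaves t}"
  fix w assume w: "w \<in> Wm (mset ?z)"
  then have ms: "mset w = mset ?z" by (simp add: Wm_def)
  show "inspan lyn_mon ?Tg (LN w)"
  proof (cases "distinct ?z")
    case True
    let ?m = "Min (set ?z)"
    have z: "distinct ?z" "?m \<in> set ?z" "\<forall>x\<in>set ?z. ?m \<le> x" using True leaves_ne[of t] by auto
    have "?m \<in> set w" using z(2) ms by (metis mset_eq_setD)
    from LN_front[OF this] have "inspan LN (Dz ?z ?m) (LN w)" using ms by (simp add: Dz_def)
    then have "inspan lyn_mon (Dz ?z ?m) (LN w)" by (rule inspan_trans) (rule LN_in_P[OF z])
    moreover have "Dz ?z ?m \<subseteq> ?Tg" using Dz_props[OF z] by (auto simp: nleaves_leaves)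
    ultimately show ?thesis by (rule inspan_mono)
  next
    case False
    then have "\<not> distinct w" using ms mset_eq_imp_distinct_iff by blast
    then have "rl_eq (LN w) (\<lambda>_. 0)" by (intro LN_zero not_distinct_len)
    then show ?thesis using inspan_zero inspan_cong by blast
  qed
qed

lemma fin_decomp: "fin_supp x \<Longrightarrow> x = (\<lambda>s. \<Sum>t\<in>supp x. x t * gt t s)"
proof (rule ext)
  fix s assume "fin_supp x"
  then have f: "finite (supp x)" by (simp add: fin_supp_supp)
  have "(\<Sum>t\<in>supp x. x t * gt t s) = (\<Sum>t\<in>supp x. if s = t then x t else 0)"
    by (rule sum.cong) (auto simp: gt_def)
  also have "\<dots> = x s" using f by (simp add: supp_def)
  finally show "x s = (\<Sum>t\<in>supp x. x t * gt t s)" by simp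
qed

lemma span_general:
  assumes fx: "fin_supp x" and S: "\<And>t. x t \<noteq> 0 \<Longrightarrow> {w::'a::linorder list. lyndon w \<and> distinct w \<and> length w = nleaves t} \<subseteq> S"
  shows "inspan lyn_mon S x"
proof -
  have "inspan lyn_mon S (\<lambda>s. \<Sum>t\<in>supp x. x t * gt t s)"
  proof (rule inspan_sum)
    show "finite (supp x)" using fx by (simp add: fin_supp_supp)
    fix t assume "t \<in> supp x"
    then have "inspan lyn_mon S (gt t)" using gt_span S by (auto simp: supp_def intro: inspan_mono)
    then show "inspan lyn_mon S (\<lambda>s. x t * gt t s)" by (rule inspan_smult)
  qed
  then show ?thesis using fin_decomp[OF fx] by simp
qed

lemma part2:
  fixes x :: "'a::linorder btree \<Rightarrow> int"
  assumes "fin_supp x"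
  shows "\<exists>c :: 'a list \<Rightarrow> int. finite {w. c w \<noteq> 0} \<and>
           (\<forall>w. c w \<noteq> 0 \<longrightarrow> lyndon w \<and> distinct w) \<and> rl_eq x (lyn_comb c)"
proof -
  have "inspan lyn_mon {w::'a list. lyndon w \<and> distinct w} x"
    by (rule span_general[OF assms]) auto
  then show ?thesis unfolding inspan_def lyn_comb_comb by blast
qed

lemma homog_lyn_mon: "w \<noteq> [] \<Longrightarrow> homog (length w) (lyn_mon (w::'a::linorder list))"
proof (induct "length w" arbitrary: w rule: less_induct)
  case less
  show ?case unfolding homog_def
  proof (intro conjI allI impI)
    show "fin_supp (lyn_mon w)" by (rule fin_supp_lyn_mon)
    fix t assume t: "lyn_mon w t \<noteq> 0"
    show "nleaves t = length w"
    proof (cases "length w \<le> 1")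
      case True
      then have "length w = 1" using less.prems by (cases w) auto
      moreover have "t = Leaf (hd w)" using t True by (simp add: lyn_mon_short gen_def split: if_splits)
      ultimately show ?thesis by simp
    next
      case False
      then have l2: "2 \<le> length w" by simp
      note uv = lyn_uv[OF l2]
      have wuv: "lyn_u w @ lyn_v w = w" using uv(1) by metis
      have hu: "homog (length (lyn_u w)) (lyn_mon (lyn_u w))" using less.hyps[OF uv(4) uv(2)] .
      have hv: "homog (length (lyn_v w)) (lyn_mon (lyn_v w))" using less.hyps[OF uv(5) uv(3)] .
      have "mmul (lyn_mon (lyn_u w)) (lyn_mon (lyn_v w)) t \<noteq> 0" using t by (simp add: lyn_mon_long[OF l2])
      then obtain a b where ab: "t = Br a b" "lyn_mon (lyn_u w) a \<noteq> 0" "lyn_mon (lyn_v w) b \<noteq> 0"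
        by (cases t) (auto simp: mmul_def)
      then have "nleaves t = length (lyn_u w) + length (lyn_v w)" using hu hv by (auto simp: homog_def)
      also have "\<dots> = length w" using wuv by (metis length_append)
      finally show ?thesis .
    qed
  qed
qed

section \<open>Counting repetition-free Lyndon words\<close>

definition LD :: "nat \<Rightarrow> 'a::linorder list set" where
  "LD k = {w. lyndon w \<and> distinct w \<and> length w = k}"

lemma finite_LD: "finite (UNIV :: 'a set) \<Longrightarrow> finite (LD k :: 'a::linorder list set)"
proof -
  assume f: "finite (UNIV :: 'a set)"
  have "LD k \<subseteq> {w::'a list. set w \<subseteq> UNIV \<and> length w = k}" by (auto simp: LD_def)
  moreover have "finite {w::'a list. set w \<subseteq> UNIV \<and> length w = k}" by (rule finite_lists_length_eq[OF f])
  ultimately show ?thesis by (rule finite_subset)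
qed

lemma lyndon_distinct_hd_min:
  fixes w :: "'a::linorder list"
  assumes "lyndon w" "distinct w"
  shows "w \<noteq> []" "\<forall>x\<in>set w. hd w \<le> x"
  using distinct_lyndon_iff[OF assms(2)] assms(1) by auto

lemma rot_pos:
  fixes w :: "'a::linorder list"
  assumes "length w = k" "i < k"
  shows "rotate i w ! ((k - i) mod k) = w ! 0" "(k - i) mod k < k"
proof -
  have k: "0 < k" using assms by simp
  have "(i + (k - i) mod k) mod k = 0"
  proof (cases "i = 0")
    case True then show ?thesis by simp
  next
    case False
    then have "(k - i) mod k = k - i" using assms by simp
    then show ?thesis using assms by simp
  qed
  moreover show "(k - i) mod k < k" using k by simp
  ultimately show "rotate i w ! ((k - i) mod k) = w ! 0" using assms by (simp add: nth_rotate)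
qed

lemma card_LD:
  assumes f: "finite (UNIV :: 'a set)" and k: "1 \<le> k"
  shows "card (LD k :: 'a::linorder list set) = fact (k - 1) * (card (UNIV :: 'a set) choose k)"
proof (cases "k \<le> card (UNIV :: 'a set)")
  case False
  have "LD k = ({} :: 'a list set)"
  proof (rule ccontr)
    assume "LD k \<noteq> ({} :: 'a list set)"
    then obtain w :: "'a list" where "distinct w" "length w = k" by (auto simp: LD_def)
    then have "card (set w) = k" by (simp add: distinct_card)
    moreover have "card (set w) \<le> card (UNIV :: 'a set)" by (rule card_mono[OF f]) simp
    ultimately show False using False by simp
  qed
  then show ?thesis using False by simp
next
  case True
  let ?n = "card (UNIV :: 'a set)"
  let ?DW = "{xs::'a list. length xs = k \<and> distinct xs \<and> set xs \<subseteq> UNIV}"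
  let ?f = "\<lambda>(w::'a list, i::nat). rotate i w"
  have cDW: "card ?DW = \<Prod>{?n - k + 1 .. ?n}" by (rule card_lists_distinct_length_eq[OF f True])
  have inj: "inj_on ?f (LD k \<times> {..<k})"
  proof (rule inj_onI)
    fix p q assume p: "p \<in> LD k \<times> {..<k}" and q: "q \<in> LD k \<times> {..<k}" and e: "?f p = ?f q"
    obtain w i where pw: "p = (w, i)" by (cases p)
    obtain w' j where qw: "q = (w', j)" by (cases q)
    have w: "lyndon w" "distinct w" "length w = k" "i < k" using p pw by (auto simp: LD_def)
    have w': "lyndon w'" "distinct w'" "length w' = k" "j < k" using q qw by (auto simp: LD_def)
    let ?x = "rotate i w"
    have ex: "rotate j w' = ?x" using e pw qw by simp
    have ne: "w \<noteq> []" "w' \<noteq> []" using lyndon_distinct_hd_min(1) w(1,2) w'(1,2) by auto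
    then have hw: "w ! 0 = hd w" "w' ! 0 = hd w'" by (auto simp: hd_conv_nth)
    have sets: "set w = set w'" using ex by (metis set_rotate)
    have "hd w' \<in> set w" using sets ne(2) by simp
    then have "hd w \<le> hd w'" using lyndon_distinct_hd_min(2)[OF w(1,2)] by blast
    moreover have "hd w \<in> set w'" using sets ne(1) by (metis list.set_sel(1))
    then have "hd w' \<le> hd w" using lyndon_distinct_hd_min(2)[OF w'(1,2)] by blast
    ultimately have hh: "hd w = hd w'" by simp
    have dx: "distinct ?x" using w by simp
    have "?x ! ((k - i) mod k) = hd w" using rot_pos[OF w(3,4)] hw by simp
    moreover have "?x ! ((k - j) mod k) = hd w'" using rot_pos[OF w'(3,4)] hw ex by simp
    moreover have "(k - i) mod k < length ?x" "(k - j) mod k < length ?x"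
      using rot_pos[OF w(3,4)] rot_pos[OF w'(3,4)] w by auto
    ultimately have "(k - i) mod k = (k - j) mod k" using hh dx nth_eq_iff_index_eq by metis
    then have ij: "i = j" using w(4) w'(4) by (cases "i = 0"; cases "j = 0") auto
    have "rotate (k - i) (rotate i w) = rotate (k - i) (rotate i w')" using ex ij by simp
    then have "w = w'" using w w' by (simp add: rotate_rotate)
    then show "p = q" using pw qw ij by simp
  qed
  have img: "?f ` (LD k \<times> {..<k}) = ?DW"
  proof
    show "?f ` (LD k \<times> {..<k}) \<subseteq> ?DW" by (auto simp: LD_def)
    show "?DW \<subseteq> ?f ` (LD k \<times> {..<k})"
    proof
      fix x assume x: "x \<in> ?DW"
      then have xk: "length x = k" "distinct x" by auto
      have ne: "set x \<noteq> {}" using xk k by auto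
      let ?m = "Min (set x)"
      obtain p where p: "p < k" "x ! p = ?m" using Min_in[OF finite_set ne] xk by (metis in_set_conv_nth)
      let ?w = "rotate p x"
      let ?i = "(k - p) mod k"
      have "rotate ?i ?w = rotate (?i + p) x" by (simp add: rotate_rotate)
      also have "(?i + p) mod length x = 0"
      proof (cases "p = 0")
        case True then show ?thesis by simp
      next
        case False then have "?i = k - p" using p by simp
        then show ?thesis using p xk by simp
      qed
      then have "rotate (?i + p) x = x" by (rule rotate_id)
      finally have rx: "rotate ?i ?w = x" .
      have wne: "?w \<noteq> []" using xk k by auto
      have "hd ?w = ?w ! 0" using wne by (simp add: hd_conv_nth)
      also have "\<dots> = x ! ((p + 0) mod length x)" using xk k by (simp add: nth_rotate)
      also have "\<dots> = ?m" using p xk by simp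
      finally have hdw: "hd ?w = ?m" .
      have "lyndon ?w" using distinct_lyndon_iff[of ?w] xk wne hdw by auto
      then have "?w \<in> LD k" using xk by (simp add: LD_def)
      moreover have "?i < k" using k by simp
      ultimately show "x \<in> ?f ` (LD k \<times> {..<k})" using rx by force
    qed
  qed
  have "card (LD k :: 'a list set) * k = card ?DW"
    using card_image[OF inj] img by (simp add: card_cartesian_product)
  also have "\<dots> = \<Prod>{?n - k + 1 .. ?n}" by (rule cDW)
  finally have c1: "card (LD k :: 'a list set) * k = \<Prod>{Suc (?n - k) .. ?n}" by simp
  have "fact ?n = (fact (?n - k) :: nat) * \<Prod>{Suc (?n - k) .. ?n}"
    by (rule fact_eq_fact_times) simp
  moreover have "fact k * fact (?n - k) * (?n choose k) = (fact ?n :: nat)"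
    by (rule binomial_fact_lemma[OF True])
  ultimately have "fact (?n - k) * \<Prod>{Suc (?n - k) .. ?n} = fact (?n - k) * (fact k * (?n choose k) :: nat)"
    by (simp add: ac_simps)
  then have "\<Prod>{Suc (?n - k) .. ?n} = (fact k * (?n choose k) :: nat)" by simp
  with c1 have "card (LD k :: 'a list set) * k = fact k * (?n choose k)" by simp
  moreover have "(fact k :: nat) = k * fact (k - 1)" using k by (metis fact_num_eq_if not_one_le_zero of_nat_id)
  ultimately have "card (LD k :: 'a list set) * k = (fact (k - 1) * (?n choose k)) * k"
    by (simp only: ac_simps)
  moreover have "k \<noteq> 0" using k by simp
  ultimately show ?thesis by (metis mult_right_cancel)
qed

lemma part3:
  assumes f: "finite (UNIV :: 'a set)" and k: "1 \<le> k"
  shows "\<exists>b :: nat \<Rightarrow> ('a::linorder btree \<Rightarrow> int).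
           let r = fact (k - 1) * (card (UNIV :: 'a set) choose k) in
           (\<forall>i<r. homog k (b i))
           \<and> (\<forall>c :: nat \<Rightarrow> int. rl_eq (\<lambda>t. \<Sum>i<r. c i * b i t) (\<lambda>_. 0) \<longrightarrow> (\<forall>i<r. c i = 0))
           \<and> (\<forall>x. homog k x \<longrightarrow> (\<exists>c :: nat \<Rightarrow> int. rl_eq x (\<lambda>t. \<Sum>i<r. c i * b i t)))"
proof -
  let ?L = "LD k :: 'a list set"
  let ?r = "card ?L"
  have fL: "finite ?L" by (rule finite_LD[OF f])
  have rr: "fact (k - 1) * (card (UNIV :: 'a set) choose k) = ?r" using card_LD[OF f k] by simp
  obtain b0 where b0: "bij_betw b0 {0..<?r} ?L" using ex_bij_betw_nat_finite[OF fL] by blast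
  then have bij: "bij_betw b0 {..<?r} ?L" by (simp add: atLeast0LessThan)
  have sr: "(\<Sum>i<?r. g (b0 i)) = (\<Sum>w\<in>?L. g w)" for g :: "'a list \<Rightarrow> int"
    by (rule sum.reindex_bij_betw[OF bij])
  have bL: "i < ?r \<Longrightarrow> b0 i \<in> ?L" for i using bij by (auto dest: bij_betwE)
  let ?b = "\<lambda>i. lyn_mon (b0 i)"
  have H: "\<forall>i<?r. homog k (?b i)"
  proof (intro allI impI)
    fix i assume "i < ?r"
    then have "b0 i \<in> ?L" by (rule bL)
    then have "lyndon (b0 i)" "length (b0 i) = k" by (auto simp: LD_def)
    then show "homog k (?b i)" using homog_lyn_mon[of "b0 i"] by (auto simp: lyndon_def)
  qed
  have I: "\<forall>c :: nat \<Rightarrow> int. rl_eq (\<lambda>t. \<Sum>i<?r. c i * ?b i t) (\<lambda>_. 0) \<longrightarrow> (\<forall>i<?r. c i = 0)"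
  proof (intro allI impI)
    fix c :: "nat \<Rightarrow> int" and i
    assume eq: "rl_eq (\<lambda>t. \<Sum>i<?r. c i * ?b i t) (\<lambda>_. 0)" and i: "i < ?r"
    define c' where "c' w = (if w \<in> ?L then c (the_inv_into {..<?r} b0 w) else 0)" for w
    have inj: "inj_on b0 {..<?r}" using bij by (simp add: bij_betw_def)
    have c'b: "j < ?r \<Longrightarrow> c' (b0 j) = c j" for j
      using bL[of j] the_inv_into_f_f[OF inj, of j] by (simp add: c'_def)
    have sub: "{w. c' w \<noteq> 0} \<subseteq> ?L" by (auto simp: c'_def split: if_splits)
    have fc': "finite {w. c' w \<noteq> 0}" using finite_subset[OF sub fL] .
    have "lyn_comb c' = (\<lambda>t. \<Sum>i<?r. c i * ?b i t)"
    proof (rule ext)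
      fix t
      have "lyn_comb c' t = (\<Sum>w\<in>?L. c' w * lyn_mon w t)"
        unfolding lyn_comb_comb by (rule comb_superset[OF fL sub])
      also have "\<dots> = (\<Sum>j<?r. c' (b0 j) * lyn_mon (b0 j) t)" by (rule sr[symmetric])
      also have "\<dots> = (\<Sum>j<?r. c j * ?b j t)" by (rule sum.cong) (simp_all add: c'b)
      finally show "lyn_comb c' t = (\<Sum>i<?r. c i * ?b i t)" .
    qed
    then have "rl_eq (lyn_comb c') (\<lambda>_. 0)" using eq by simp
    moreover have "\<forall>w. c' w \<noteq> 0 \<longrightarrow> lyndon w \<and> distinct w" using sub by (auto simp: LD_def)
    ultimately have "\<forall>w. c' w = 0" using part1[OF fc'] by blast
    then show "c i = 0" using c'b[OF i] by simp
  qed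
  have S: "\<forall>x. homog k x \<longrightarrow> (\<exists>c :: nat \<Rightarrow> int. rl_eq x (\<lambda>t. \<Sum>i<?r. c i * ?b i t))"
  proof (intro allI impI)
    fix x :: "'a btree \<Rightarrow> int" assume h: "homog k x"
    have "inspan lyn_mon ?L x"
      by (rule span_general) (use h in \<open>auto simp: homog_def LD_def\<close>)
    then obtain c where c: "finite {w. c w \<noteq> 0}" "{w. c w \<noteq> 0} \<subseteq> ?L" "rl_eq x (comb lyn_mon c)"
      unfolding inspan_def by blast
    have "comb lyn_mon c = (\<lambda>t. \<Sum>i<?r. c (b0 i) * ?b i t)"
    proof (rule ext)
      fix t
      have "comb lyn_mon c t = (\<Sum>w\<in>?L. c w * lyn_mon w t)" by (rule comb_superset[OF fL c(2)])
      also have "\<dots> = (\<Sum>i<?r. c (b0 i) * ?b i t)" by (rule sr[symmetric])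
      finally show "comb lyn_mon c t = (\<Sum>i<?r. c (b0 i) * ?b i t)" .
    qed
    then show "\<exists>c :: nat \<Rightarrow> int. rl_eq x (\<lambda>t. \<Sum>i<?r. c i * ?b i t)" using c(3) by auto
  qed
  show ?thesis unfolding Let_def rr
    by (rule exI[of _ ?b], intro conjI, fact H, fact I, fact S)
qed

theorem proposition2p9:
  fixes Y :: "'a::linorder itself"
  shows
   "(\<forall>c :: 'a list \<Rightarrow> int.
        finite {w. c w \<noteq> 0} \<and> (\<forall>w. c w \<noteq> 0 \<longrightarrow> lyndon w \<and> distinct w) \<and>
        rl_eq (lyn_comb c) (\<lambda>_. 0) \<longrightarrow> (\<forall>w. c w = 0))
    \<and> (\<forall>x :: 'a btree \<Rightarrow> int. fin_supp x \<longrightarrow>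
        (\<exists>c :: 'a list \<Rightarrow> int. finite {w. c w \<noteq> 0} \<and>
           (\<forall>w. c w \<noteq> 0 \<longrightarrow> lyndon w \<and> distinct w) \<and> rl_eq x (lyn_comb c)))
    \<and> (finite (UNIV :: 'a set) \<longrightarrow>
        (\<forall>k \<ge> 1. \<exists>b :: nat \<Rightarrow> ('a btree \<Rightarrow> int).
           let r = fact (k - 1) * (card (UNIV :: 'a set) choose k) in
           (\<forall>i<r. homog k (b i))
           \<and> (\<forall>c :: nat \<Rightarrow> int. rl_eq (\<lambda>t. \<Sum>i<r. c i * b i t) (\<lambda>_. 0) \<longrightarrow> (\<forall>i<r. c i = 0))
           \<and> (\<forall>x. homog k x \<longrightarrow> (\<exists>c :: nat \<Rightarrow> int. rl_eq x (\<lambda>t. \<Sum>i<r. c i * b i t)))))"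
  using part1 part2 part3 by blast

end
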